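(* Let $\lambda>0$, $L=D^2+\lambda^2$ and $[a,b]=[0,\pi/\lambda]$. Consider partitions $\Delta=\{0=t_1<\dots<t_n=\pi/\lambda\}$ in which one subsegment $[t_j,t_{j+1}]$ has length $\pi/\lambda-\varepsilon$ (so that the sum of the lengths of all other subsegments is $\varepsilon>0$). Then, as $\varepsilon\to 0$, uniformly in such partitions and in $f\in C[a,b]$, \[ \max_{i=1,\dots,n}\bigl|P_{\mathbb{S}(L,\Delta)}f(t_i)\bigr|\le\Bigl(\frac{38}{\pi}+O(\varepsilon)\Bigr)\|f\|_\infty . \]
   Context: The space of trigonometric $L$-splines $\mathbb{S}(L,\Delta)$ consists of the continuous functions $s$ on $[a,b]$ such that on each subsegment $[t_i,t_{i+1}]$ of the partition, $s$ is a linear combination of $\sin\lambda x$ and $\cos\lambda x$. $P_{\mathbb{S}(L,\Delta)}:C[a,b]\to\mathbb{S}(L,\Delta)$ is the orthogonal projection with respect to the $L_2[a,b]$ inner product, i.e. $P f\in\mathbb{S}(L,\Delta)$ and $\langle f,s\rangle=\langle Pf,s\rangle$ for all $s\in\mathbb{S}(L,\Delta)$. $\|f\|_\infty$ denotes the uniform norm on $[a,b]$. *)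

theory Defs
  imports "HOL-Analysis.Analysis"
begin

definition is_partition :: "real \<Rightarrow> nat \<Rightarrow> (nat \<Rightarrow> real) \<Rightarrow> bool" where
  "is_partition b n t \<longleftrightarrow> 2 \<le> n \<and> t 1 = 0 \<and> t n = b \<and> (\<forall>i\<in>{1..<n}. t i < t (Suc i))"

text \<open>Trigonometric L-splines for L = D^2 + lam^2 on [0, pi/lam] with knots t 1..t n.\<close>
definition trig_spline_space :: "real \<Rightarrow> nat \<Rightarrow> (nat \<Rightarrow> real) \<Rightarrow> (real \<Rightarrow> real) set" where
  "trig_spline_space lam n t =
     {s. continuous_on {0..pi/lam} s \<and>
         (\<forall>i\<in>{1..<n}. \<exists>\<alpha> \<beta>. \<forall>x\<in>{t i..t (Suc i)}. s x = \<alpha> * sin (lam * x) + \<beta> * cos (lam * x))}"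

definition L2_inner :: "real \<Rightarrow> (real \<Rightarrow> real) \<Rightarrow> (real \<Rightarrow> real) \<Rightarrow> real" where
  "L2_inner lam f g = integral {0..pi/lam} (\<lambda>x. f x * g x)"

definition spline_proj :: "real \<Rightarrow> nat \<Rightarrow> (nat \<Rightarrow> real) \<Rightarrow> (real \<Rightarrow> real) \<Rightarrow> (real \<Rightarrow> real)" where
  "spline_proj lam n t f = (SOME p. p \<in> trig_spline_space lam n t \<and>
      (\<forall>s\<in>trig_spline_space lam n t. L2_inner lam f s = L2_inner lam p s))"

definition sup_norm :: "real \<Rightarrow> (real \<Rightarrow> real) \<Rightarrow> real" where
  "sup_norm lam f = (SUP x\<in>{0..pi/lam}. \<bar>f x\<bar>)"

end

theory Submission
  imports Defs "HOL-Analysis.Analysis"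
begin

definition ipr :: "real \<Rightarrow> real \<Rightarrow> (real \<Rightarrow> real) \<Rightarrow> (real \<Rightarrow> real) \<Rightarrow> real" where
  "ipr lo hi h g = integral {lo..hi} (\<lambda>x. h x * g x)"

lemma ipr_comm: "ipr lo hi h g = ipr lo hi g h"
  unfolding ipr_def by (simp add: mult.commute)

lemma ipr_lin:
  assumes "continuous_on {lo..hi} h1" "continuous_on {lo..hi} h2" "continuous_on {lo..hi} g"
  shows "ipr lo hi (\<lambda>x. a * h1 x + b * h2 x) g = a * ipr lo hi h1 g + b * ipr lo hi h2 g"
proof -
  have i1: "(\<lambda>x. a * (h1 x * g x)) integrable_on {lo..hi}"
    by (intro integrable_continuous_interval continuous_intros assms)
  have i2: "(\<lambda>x. b * (h2 x * g x)) integrable_on {lo..hi}"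
    by (intro integrable_continuous_interval continuous_intros assms)
  have "ipr lo hi (\<lambda>x. a * h1 x + b * h2 x) g = integral {lo..hi} (\<lambda>x. a * (h1 x * g x) + b * (h2 x * g x))"
    unfolding ipr_def by (rule Henstock_Kurzweil_Integration.integral_cong) (simp add: algebra_simps)
  also have "\<dots> = integral {lo..hi} (\<lambda>x. a * (h1 x * g x)) + integral {lo..hi} (\<lambda>x. b * (h2 x * g x))"
    using i1 i2 by (rule integral_add)
  also have "\<dots> = a * ipr lo hi h1 g + b * ipr lo hi h2 g"
    unfolding ipr_def by (simp add: Henstock_Kurzweil_Integration.integral_mult_right)
  finally show ?thesis .
qed

lemma ipr_cong:
  assumes "\<And>x. x \<in> {lo..hi} \<Longrightarrow> h x = h' x" "\<And>x. x \<in> {lo..hi} \<Longrightarrow> g x = g' x"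
  shows "ipr lo hi h g = ipr lo hi h' g'"
  unfolding ipr_def by (rule Henstock_Kurzweil_Integration.integral_cong) (simp add: assms)

lemma ipr_zero_left: "ipr lo hi (\<lambda>x. 0) g = 0"
  unfolding ipr_def by simp

lemma ipr_self_zero:
  assumes "continuous_on {lo..hi} e" "lo < hi" "ipr lo hi e e = 0" "x \<in> {lo..hi}"
  shows "e x = 0"
proof -
  have c: "continuous_on (cbox lo hi) (\<lambda>x. e x * e x)"
    using assms(1) by (auto intro!: continuous_intros)
  have "((\<lambda>x. e x * e x) has_integral 0) (cbox lo hi)"
    using assms(3) integrable_continuous_interval[OF c[unfolded cbox_interval]]
    unfolding ipr_def cbox_interval by (metis has_integral_integral)
  then have "e x * e x = 0"
    using has_integral_0_cbox_imp_0[OF c, of x] assms(2,4) by auto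
  then show ?thesis by simp
qed

lemma gram_schmidt:
  fixes V :: "(real \<Rightarrow> real) set"
  assumes Vc: "\<And>v. v \<in> V \<Longrightarrow> continuous_on {lo..hi} v"
    and V0: "(\<lambda>x. 0) \<in> V"
    and Vlin: "\<And>v w a b. v \<in> V \<Longrightarrow> w \<in> V \<Longrightarrow> (\<lambda>x. a * v x + b * w x) \<in> V"
    and lohi: "lo < hi"
  shows "set gs \<subseteq> V \<Longrightarrow> continuous_on {lo..hi} f \<Longrightarrow>
    \<exists>p\<in>V. (\<forall>g\<in>set gs. ipr lo hi (\<lambda>x. f x - p x) g = 0) \<and>
      (\<forall>h. continuous_on {lo..hi} h \<longrightarrow> (\<forall>g\<in>set gs. ipr lo hi h g = 0) \<longrightarrow> ipr lo hi h p = 0)"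
proof (induction gs arbitrary: f)
  case Nil
  show ?case by (intro bexI[of _ "\<lambda>x. 0"] V0) (auto simp: ipr_def)
next
  case (Cons g gs)
  have gV: "g \<in> V" and gsV: "set gs \<subseteq> V" using Cons.prems by auto
  obtain p0 where p0V: "p0 \<in> V" and p0o: "\<forall>g\<in>set gs. ipr lo hi (\<lambda>x. f x - p0 x) g = 0"
    and p0s: "\<forall>h. continuous_on {lo..hi} h \<longrightarrow> (\<forall>g\<in>set gs. ipr lo hi h g = 0) \<longrightarrow> ipr lo hi h p0 = 0"
    using Cons.IH[OF gsV Cons.prems(2)] by blast
  obtain q where qV: "q \<in> V" and qo: "\<forall>g'\<in>set gs. ipr lo hi (\<lambda>x. g x - q x) g' = 0"
    and qs: "\<forall>h. continuous_on {lo..hi} h \<longrightarrow> (\<forall>g\<in>set gs. ipr lo hi h g = 0) \<longrightarrow> ipr lo hi h q = 0"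
    using Cons.IH[OF gsV Vc[OF gV]] by blast
  define e where "e = (\<lambda>x. 1 * g x + (-1) * q x)"
  have eV: "e \<in> V" unfolding e_def by (rule Vlin[OF gV qV])
  have ec: "continuous_on {lo..hi} e" using Vc[OF eV] .
  have fc: "continuous_on {lo..hi} f" by fact
  have p0c: "continuous_on {lo..hi} p0" using Vc[OF p0V] .
  have qc: "continuous_on {lo..hi} q" using Vc[OF qV] .
  have gc: "continuous_on {lo..hi} g" using Vc[OF gV] .
  have eo: "\<forall>g'\<in>set gs. ipr lo hi e g' = 0"
    using qo unfolding e_def by simp
  have g_eq: "g = (\<lambda>x. 1 * e x + 1 * q x)" unfolding e_def by auto
  have r_c: "continuous_on {lo..hi} (\<lambda>x. f x - p0 x)"
    using fc p0c by (intro continuous_intros)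
  show ?case
  proof (cases "ipr lo hi e e = 0")
    case True
    have e0: "\<And>x. x \<in> {lo..hi} \<Longrightarrow> e x = 0" using ipr_self_zero[OF ec lohi True] by blast
    have "ipr lo hi (\<lambda>x. f x - p0 x) g = ipr lo hi (\<lambda>x. f x - p0 x) (\<lambda>x. 1 * e x + 1 * q x)"
      by (subst g_eq) (rule refl)
    also have "\<dots> = 1 * ipr lo hi e (\<lambda>x. f x - p0 x) + 1 * ipr lo hi q (\<lambda>x. f x - p0 x)"
      by (subst ipr_comm, rule ipr_lin[OF ec qc r_c])
    also have "ipr lo hi e (\<lambda>x. f x - p0 x) = ipr lo hi (\<lambda>x. 0) (\<lambda>x. f x - p0 x)"
      by (rule ipr_cong) (auto simp: e0)
    also have "ipr lo hi q (\<lambda>x. f x - p0 x) = 0"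
      using qs r_c p0o by (metis ipr_comm)
    finally have "ipr lo hi (\<lambda>x. f x - p0 x) g = 0" by (simp add: ipr_zero_left)
    then show ?thesis using p0V p0o p0s by auto
  next
    case False
    define \<kappa> where "\<kappa> = ipr lo hi (\<lambda>x. f x - p0 x) e / ipr lo hi e e"
    define p where "p = (\<lambda>x. 1 * p0 x + \<kappa> * e x)"
    have pV: "p \<in> V" unfolding p_def by (rule Vlin[OF p0V eV])
    have fp_eq: "(\<lambda>x. f x - p x) = (\<lambda>x. 1 * (f x - p0 x) + (-\<kappa>) * e x)"
      unfolding p_def by auto
    have fpc: "continuous_on {lo..hi} (\<lambda>x. f x - p x)"
      using fc Vc[OF pV] by (intro continuous_intros)
    have o1: "\<forall>g'\<in>set gs. ipr lo hi (\<lambda>x. f x - p x) g' = 0"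
    proof
      fix g' assume g': "g' \<in> set gs"
      have "ipr lo hi (\<lambda>x. f x - p x) g' = 1 * ipr lo hi (\<lambda>x. f x - p0 x) g' + (-\<kappa>) * ipr lo hi e g'"
        unfolding fp_eq by (rule ipr_lin[OF r_c ec Vc]) (use g' gsV in auto)
      then show "ipr lo hi (\<lambda>x. f x - p x) g' = 0" using g' p0o eo by simp
    qed
    have "ipr lo hi (\<lambda>x. f x - p x) e = 1 * ipr lo hi (\<lambda>x. f x - p0 x) e + (-\<kappa>) * ipr lo hi e e"
      unfolding fp_eq by (rule ipr_lin[OF r_c ec ec])
    also have "\<dots> = 0" using False unfolding \<kappa>_def by simp
    finally have o2: "ipr lo hi (\<lambda>x. f x - p x) e = 0" .
    have o3: "ipr lo hi (\<lambda>x. f x - p x) q = 0"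
      using qs fpc o1 by (metis ipr_comm)
    have "ipr lo hi (\<lambda>x. f x - p x) g = ipr lo hi (\<lambda>x. 1 * e x + 1 * q x) (\<lambda>x. f x - p x)"
      by (subst g_eq) (rule ipr_comm)
    also have "\<dots> = 1 * ipr lo hi e (\<lambda>x. f x - p x) + 1 * ipr lo hi q (\<lambda>x. f x - p x)"
      by (rule ipr_lin[OF ec qc fpc])
    also have "\<dots> = 0" using o2 o3 by (simp add: ipr_comm)
    finally have o4: "ipr lo hi (\<lambda>x. f x - p x) g = 0" .
    have s: "\<forall>h. continuous_on {lo..hi} h \<longrightarrow> (\<forall>g\<in>set (g # gs). ipr lo hi h g = 0) \<longrightarrow> ipr lo hi h p = 0"
    proof (intro allI impI)
      fix h assume hc: "continuous_on {lo..hi} h" and ho: "\<forall>g\<in>set (g # gs). ipr lo hi h g = 0"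
      have hq: "ipr lo hi h q = 0" using qs hc ho by auto
      have hp0: "ipr lo hi h p0 = 0" using p0s hc ho by auto
      have "ipr lo hi h e = ipr lo hi (\<lambda>x. 1 * g x + (-1) * q x) h"
        unfolding e_def by (simp add: ipr_comm)
      also have "\<dots> = 1 * ipr lo hi g h + (-1) * ipr lo hi q h"
        by (rule ipr_lin[OF gc qc hc])
      also have "\<dots> = 0" using ho hq by (simp add: ipr_comm)
      finally have he: "ipr lo hi h e = 0" .
      have "ipr lo hi h p = ipr lo hi p h" by (rule ipr_comm)
      also have "\<dots> = 1 * ipr lo hi p0 h + \<kappa> * ipr lo hi e h"
        unfolding p_def by (rule ipr_lin[OF p0c ec hc])
      also have "\<dots> = 0" using hp0 he by (simp add: ipr_comm)
      finally show "ipr lo hi h p = 0" .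
    qed
    show ?thesis using pV o1 o4 s by auto
  qed
qed

lemma ftc_real:
  fixes F f :: "real \<Rightarrow> real"
  assumes "a \<le> c" "\<And>x. x \<in> {a..c} \<Longrightarrow> (F has_real_derivative f x) (at x)"
  shows "integral {a..c} f = F c - F a" and "f integrable_on {a..c}"
proof -
  have "(f has_integral F c - F a) {a..c}"
    apply (rule fundamental_theorem_of_calculus[OF assms(1)])
    using assms(2) by (simp add: has_real_derivative_iff_has_vector_derivative[symmetric] has_field_derivative_at_within)
  then show "integral {a..c} f = F c - F a" "f integrable_on {a..c}" by (auto simp: integral_unique has_integral_integrable)
qed

lemma int_sq_right:
  fixes lam a c :: real
  assumes "lam > 0" "a \<le> c"
  shows "integral {a..c} (\<lambda>x. sin (lam * (c - x)) * sin (lam * (c - x))) = ((lam*(c-a))/2 - sin (2*(lam*(c-a)))/4) / lam"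
proof -
  have "integral {a..c} (\<lambda>x. sin (lam * (c - x)) * sin (lam * (c - x))) =
     (c/2 + sin (2*(lam*(c-c)))/(4*lam)) - (a/2 + sin (2*(lam*(c-a)))/(4*lam))"
  proof (rule ftc_real(1)[OF assms(2)])
    fix x assume "x \<in> {a..c}"
    have cd: "sin (lam*(c-x)) * sin (lam*(c-x)) = 1/2 - cos (2*(lam*(c-x)))/2"
      using cos_double_sin[of "lam*(c-x)"] unfolding power2_eq_square by linarith
    show "((\<lambda>x. x/2 + sin (2*(lam*(c-x)))/(4*lam)) has_real_derivative sin (lam * (c - x)) * sin (lam * (c - x))) (at x)"
      unfolding cd using assms(1) by (auto intro!: derivative_eq_intros simp: field_simps)
  qed
  then show ?thesis using assms(1) by (simp add: field_simps)
qed

lemma int_sq_left: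
  fixes lam a c :: real
  assumes "lam > 0" "a \<le> c"
  shows "integral {a..c} (\<lambda>x. sin (lam * (x - a)) * sin (lam * (x - a))) = ((lam*(c-a))/2 - sin (2*(lam*(c-a)))/4) / lam"
proof -
  have "integral {a..c} (\<lambda>x. sin (lam * (x - a)) * sin (lam * (x - a))) =
     (c/2 - sin (2*(lam*(c-a)))/(4*lam)) - (a/2 - sin (2*(lam*(a-a)))/(4*lam))"
  proof (rule ftc_real(1)[OF assms(2)])
    fix x assume "x \<in> {a..c}"
    have cd: "sin (lam*(x-a)) * sin (lam*(x-a)) = 1/2 - cos (2*(lam*(x-a)))/2"
      using cos_double_sin[of "lam*(x-a)"] unfolding power2_eq_square by linarith
    show "((\<lambda>x. x/2 - sin (2*(lam*(x-a)))/(4*lam)) has_real_derivative sin (lam * (x - a)) * sin (lam * (x - a))) (at x)"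
      unfolding cd using assms(1) by (auto intro!: derivative_eq_intros simp: field_simps)
  qed
  then show ?thesis using assms(1) by (simp add: field_simps)
qed

lemma int_cross:
  fixes lam a c :: real
  assumes "lam > 0" "a \<le> c"
  shows "integral {a..c} (\<lambda>x. sin (lam * (c - x)) * sin (lam * (x - a))) = (sin (lam*(c-a)) - (lam*(c-a)) * cos (lam*(c-a))) / (2*lam)"
proof -
  have "integral {a..c} (\<lambda>x. sin (lam * (c - x)) * sin (lam * (x - a))) =
     (- sin (lam*(c + a - 2*c))/(4*lam) - c * cos (lam*(c-a))/2) - (- sin (lam*(c + a - 2*a))/(4*lam) - a * cos (lam*(c-a))/2)"
  proof (rule ftc_real(1)[OF assms(2)])
    fix x assume "x \<in> {a..c}"
    have e: "sin (lam * (c - x)) * sin (lam * (x - a)) = (cos (lam*(c + a - 2*x)) - cos (lam*(c-a)))/2"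
      by (simp add: sin_times_sin algebra_simps)
    show "((\<lambda>x. - sin (lam*(c + a - 2*x))/(4*lam) - x * cos (lam*(c-a))/2) has_real_derivative sin (lam * (c - x)) * sin (lam * (x - a))) (at x)"
      unfolding e
      using assms(1) by (auto intro!: derivative_eq_intros simp: field_simps)
  qed
  also have "\<dots> = (sin (lam*(c-a)) - (lam*(c-a)) * cos (lam*(c-a))) / (2*lam)"
  proof -
    have "sin (lam*(c + a - 2*c)) = - sin (lam*(c-a))"
      by (metis (no_types, opaque_lifting) sin_minus diff_add_eq_diff_diff_swap minus_diff_eq mult_2 right_diff_distrib' diff_diff_eq2 add_diff_cancel_left')
    moreover have "sin (lam*(c + a - 2*a)) = sin (lam*(c-a))" by (simp add: algebra_simps)
    ultimately show ?thesis using assms(1) by (simp add: field_simps)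
  qed
  finally show ?thesis .
qed

lemma int_right:
  fixes lam a c :: real
  assumes "lam > 0" "a \<le> c"
  shows "integral {a..c} (\<lambda>x. sin (lam * (c - x))) = (1 - cos (lam*(c-a))) / lam"
proof -
  have "integral {a..c} (\<lambda>x. sin (lam * (c - x))) = cos (lam*(c-c))/lam - cos (lam*(c-a))/lam"
  proof (rule ftc_real(1)[OF assms(2)])
    fix x assume "x \<in> {a..c}"
    show "((\<lambda>x. cos (lam*(c-x))/lam) has_real_derivative sin (lam * (c - x))) (at x)"
      using assms(1) by (auto intro!: derivative_eq_intros simp: field_simps)
  qed
  then show ?thesis using assms(1) by (simp add: field_simps)
qed

lemma int_left:
  fixes lam a c :: real
  assumes "lam > 0" "a \<le> c"
  shows "integral {a..c} (\<lambda>x. sin (lam * (x - a))) = (1 - cos (lam*(c-a))) / lam"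
proof -
  have "integral {a..c} (\<lambda>x. sin (lam * (x - a))) = (- cos (lam*(c-a))/lam) - (- cos (lam*(a-a))/lam)"
  proof (rule ftc_real(1)[OF assms(2)])
    fix x assume "x \<in> {a..c}"
    show "((\<lambda>x. - cos (lam*(x-a))/lam) has_real_derivative sin (lam * (x - a))) (at x)"
      using assms(1) by (auto intro!: derivative_eq_intros simp: field_simps)
  qed
  then show ?thesis using assms(1) by (simp add: field_simps)
qed

lemma two_dvd_SS: "(Suc (Suc 0) dvd Suc (Suc n)) = (Suc (Suc 0) dvd n)" by presburger
lemma two_ndvd_1: "\<not> Suc (Suc 0) dvd Suc 0" by presburger
lemma div_SSS: "Suc (Suc (Suc 0)) div Suc (Suc 0) = 1"
  by (simp only: numeral_3_eq_3[symmetric] numeral_2_eq_2[symmetric])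

lemma sin_bounds5:
  fixes x :: real assumes "0 \<le> x"
  shows "sin x \<le> x - x^3/6 + x^5/120" "sin x \<ge> x - x^3/6 - x^5/120"
proof -
  have "\<bar>sin x - (\<Sum>m<5. sin_coeff m * x ^ m)\<bar> \<le> inverse (fact 5) * \<bar>x\<bar> ^ 5"
    by (rule Maclaurin_sin_bound)
  moreover have "(\<Sum>m<5. sin_coeff m * x ^ m) = x - x^3/6"
    by (simp add: sin_coeff_def lessThan_Suc eval_nat_numeral fact_numeral two_dvd_SS two_ndvd_1 div_SSS)
  moreover have "inverse (fact 5) * \<bar>x\<bar> ^ 5 = x^5/120"
    using assms by (simp add: fact_numeral field_simps)
  ultimately have h: "\<bar>sin x - (x - x^3/6)\<bar> \<le> x^5/120" by simp
  then show "sin x \<le> x - x^3/6 + x^5/120" "sin x \<ge> x - x^3/6 - x^5/120"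
    unfolding abs_le_iff by linarith+
qed

lemma cos_bounds4:
  fixes x :: real
  shows "cos x \<le> 1 - x^2/2 + x^4/24" "cos x \<ge> 1 - x^2/2 - x^4/24"
proof -
  obtain t where t: "cos x = (\<Sum>m<4. cos_coeff m * x ^ m) + cos (t + 1 / 2 * real 4 * pi) / fact 4 * x ^ 4"
    using Maclaurin_cos_expansion[of x 4] by blast
  have s: "(\<Sum>m<4. cos_coeff m * x ^ m) = 1 - x^2/2"
    by (simp add: cos_coeff_def lessThan_Suc eval_nat_numeral fact_numeral two_dvd_SS two_ndvd_1 div_SSS)
  define u where "u = t + 1 / 2 * real 4 * pi"
  have f4: "(fact 4::real) = 24" by (simp add: fact_numeral)
  have c1: "\<bar>cos u\<bar> * x^4 \<le> x^4"
    by (rule mult_left_le_one_le) auto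
  have "\<bar>cos u / fact 4 * x ^ 4\<bar> = \<bar>cos u\<bar> * x^4 / 24" by (simp add: f4 abs_mult)
  also have "\<dots> \<le> x^4/24" using c1 by (simp add: divide_right_mono)
  finally have r: "\<bar>cos u / fact 4 * x ^ 4\<bar> \<le> x^4/24" .
  have t': "cos x = 1 - x^2/2 + cos u / fact 4 * x ^ 4" using t s unfolding u_def by simp
  show "cos x \<le> 1 - x^2/2 + x^4/24" "cos x \<ge> 1 - x^2/2 - x^4/24"
    using r t' unfolding abs_le_iff by linarith+
qed

lemma trig_ineqs:
  fixes th :: real assumes th: "0 < th" "th \<le> 1"
  shows "th/2 - sin (2*th)/4 - (sin th - th * cos th)/2 \<ge> sin th * (1 - cos th) / 8"
    and "sin th - th * cos th \<ge> 0"
    and "cos th < 1" and "sin th > 0"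
proof -
  have S1: "sin (2*th) \<le> 2*th - (2*th)^3/6 + (2*th)^5/120" using sin_bounds5(1)[of "2*th"] th by simp
  have S: "sin th \<le> th - th^3/6 + th^5/120" "sin th \<ge> th - th^3/6 - th^5/120" using sin_bounds5 th by auto
  have C: "cos th \<le> 1 - th^2/2 + th^4/24" "cos th \<ge> 1 - th^2/2 - th^4/24" using cos_bounds4 by auto
  have p53: "th^5 \<le> th^3" using th by (intro power_decreasing) auto
  have p42: "th^4 \<le> th^2" using th by (intro power_decreasing) auto
  have p32: "th^3 \<le> th^2" using th by (intro power_decreasing) auto
  have p3: "th^3 > 0" "th^2 > 0" using th by auto
  have sinpos: "sin th > 0" using th pi_gt3 by (intro sin_gt_zero) auto
  have sinle: "sin th \<le> th" using sin_x_le_x[of th] th by simp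
  have thC: "th * cos th \<ge> th - th^3/2 - th^5/24"
  proof -
    have "th * cos th \<ge> th * (1 - th^2/2 - th^4/24)" using C(2) th by (intro mult_left_mono) auto
    then show ?thesis by (simp add: algebra_simps power_def)
  qed
  have thC2: "th * cos th \<le> th - th^3/2 + th^5/24"
  proof -
    have "th * cos th \<le> th * (1 - th^2/2 + th^4/24)" using C(1) th by (intro mult_left_mono) auto
    then show ?thesis by (simp add: algebra_simps power_def)
  qed
  have omc: "1 - cos th \<ge> 0" by simp
  have R: "sin th * (1 - cos th) \<le> th^3/2 + th^5/24"
  proof -
    have "sin th * (1 - cos th) \<le> th * (th^2/2 + th^4/24)"
      using sinle sinpos omc C(2) by (intro mult_mono) auto
    then show ?thesis by (simp add: algebra_simps power_def)
  qed
  have e2: "(2*th)^3 = 8 * th^3" "(2*th)^5 = 32 * th^5" by (simp_all add: power_mult_distrib)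
  show "th/2 - sin (2*th)/4 - (sin th - th * cos th)/2 \<ge> sin th * (1 - cos th) / 8"
  proof -
    define P where "P = sin th * (1 - cos th)"
    define Q where "Q = th * cos th"
    define A where "A = th^3"
    define B where "B = th^5"
    have "sin (2*th) \<le> 2*th - 8*A/6 + 32*B/120" using S1 e2 unfolding A_def B_def by simp
    moreover have "sin th \<le> th - A/6 + B/120" using S(1) unfolding A_def B_def by simp
    moreover have "Q \<ge> th - A/2 - B/24" using thC unfolding Q_def A_def B_def by simp
    moreover have "P \<le> A/2 + B/24" using R unfolding P_def A_def B_def by simp
    moreover have "B \<le> A" "A > 0" using p53 p3 unfolding A_def B_def by auto
    ultimately have "th/2 - sin (2*th)/4 - (sin th - Q)/2 \<ge> P / 8" by argo
    then show ?thesis unfolding P_def Q_def .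
  qed
  show "sin th - th * cos th \<ge> 0" using S thC2 p53 p3 by linarith
  show "cos th < 1" using C p42 p3 by linarith
  show "sin th > 0" by fact
qed

lemma seg_core:
  fixes lam th S u v \<sigma> J1 J2 J0 :: real
  assumes "lam > 0" "S > 0" "J2 \<ge> 0" "J1 - J2 \<ge> S * J0 / 8" "\<bar>v\<bar> \<le> \<bar>u\<bar>" "\<sigma> * u = \<bar>u\<bar>" "\<bar>\<sigma>\<bar> = 1"
  shows "\<sigma> * (u / S^2 * J1 + v / S^2 * J2) \<ge> \<bar>u\<bar> / 8 * (J0 / S)"
proof -
  have sv: "\<sigma> * v \<ge> - \<bar>u\<bar>"
  proof -
    have "\<bar>\<sigma> * v\<bar> \<le> \<bar>u\<bar>" using assms(5,7) by (simp add: abs_mult)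
    then show ?thesis by linarith
  qed
  have "\<sigma> * v * J2 \<ge> - \<bar>u\<bar> * J2" using sv assms(3) by (intro mult_right_mono) auto
  then have "\<sigma> * u * J1 + \<sigma> * v * J2 \<ge> \<bar>u\<bar> * (J1 - J2)" using assms(6) by (simp add: algebra_simps)
  moreover have "\<bar>u\<bar> * (J1 - J2) \<ge> \<bar>u\<bar> * (S * J0 / 8)" using assms(4) by (intro mult_left_mono) auto
  ultimately have "\<sigma> * u * J1 + \<sigma> * v * J2 \<ge> \<bar>u\<bar> * (S * J0 / 8)" by linarith
  then have "(\<sigma> * u * J1 + \<sigma> * v * J2) / S^2 \<ge> (\<bar>u\<bar> * (S * J0 / 8)) / S^2"
    using assms(2) by (intro divide_right_mono) auto
  moreover have "(\<bar>u\<bar> * (S * J0 / 8)) / S^2 = \<bar>u\<bar> / 8 * (J0 / S)" using assms(2) by (simp add: power2_eq_square field_simps)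
  moreover have "(\<sigma> * u * J1 + \<sigma> * v * J2) / S^2 = \<sigma> * (u / S^2 * J1 + v / S^2 * J2)" using assms(2) by (simp add: field_simps)
  ultimately show ?thesis by simp
qed

lemma seg_test_left:
  fixes lam a c u v \<sigma> :: real and P :: "real \<Rightarrow> real"
  assumes lam: "lam > 0" and ac: "a < c" and th1: "lam * (c - a) \<le> 1"
    and P_eq: "\<And>x. x \<in> {a..c} \<Longrightarrow> P x = u * (sin (lam * (c - x)) / sin (lam * (c - a))) + v * (sin (lam * (x - a)) / sin (lam * (c - a)))"
    and uv: "\<bar>v\<bar> \<le> \<bar>u\<bar>" "\<sigma> * u = \<bar>u\<bar>" "\<bar>\<sigma>\<bar> = 1"
  shows "\<sigma> * integral {a..c} (\<lambda>x. P x * (sin (lam * (c - x)) / sin (lam * (c - a))))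
           \<ge> \<bar>u\<bar> / 8 * integral {a..c} (\<lambda>x. sin (lam * (c - x)) / sin (lam * (c - a)))"
    and "integral {a..c} (\<lambda>x. sin (lam * (c - x)) / sin (lam * (c - a))) > 0"
proof -
  define th where "th = lam * (c - a)"
  define S where "S = sin th"
  have thpos: "th > 0" using lam ac unfolding th_def by simp
  note T = trig_ineqs[OF thpos th1[folded th_def]]
  have Spos: "S > 0" using T(4) unfolding S_def .
  define J1 where "J1 = ((lam*(c-a))/2 - sin (2*(lam*(c-a)))/4) / lam"
  define J2 where "J2 = (sin (lam*(c-a)) - (lam*(c-a)) * cos (lam*(c-a))) / (2*lam)"
  define J0 where "J0 = (1 - cos (lam*(c-a))) / lam"
  have I1: "integral {a..c} (\<lambda>x. sin (lam * (c - x)) * sin (lam * (c - x))) = J1"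
    unfolding J1_def by (rule int_sq_right) (use lam ac in auto)
  have I2: "integral {a..c} (\<lambda>x. sin (lam * (c - x)) * sin (lam * (x - a))) = J2"
    unfolding J2_def by (rule int_cross) (use lam ac in auto)
  have I0: "integral {a..c} (\<lambda>x. sin (lam * (c - x))) = J0"
    unfolding J0_def by (rule int_right) (use lam ac in auto)
  have J2nn: "J2 \<ge> 0" unfolding J2_def using T(2) lam unfolding th_def by simp
  have J0pos: "J0 > 0" unfolding J0_def using T(3) lam unfolding th_def by simp
  have Jineq: "J1 - J2 \<ge> S * J0 / 8"
  proof -
    have "(th/2 - sin (2*th)/4 - (sin th - th * cos th)/2) / lam \<ge> (sin th * (1 - cos th) / 8) / lam"
      using T(1) lam by (intro divide_right_mono) auto
    moreover have "J1 - J2 = (th/2 - sin (2*th)/4 - (sin th - th * cos th)/2) / lam"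
      unfolding J1_def J2_def th_def using lam by (simp add: field_simps)
    moreover have "S * J0 / 8 = (sin th * (1 - cos th) / 8) / lam"
      unfolding S_def J0_def th_def by simp
    ultimately show ?thesis by simp
  qed
  have int0: "integral {a..c} (\<lambda>x. sin (lam * (c - x)) / S) = J0 / S"
    using I0 by (simp add: divide_inverse_commute Henstock_Kurzweil_Integration.integral_mult_right[of _ "inverse S", symmetric] mult.commute)
  have c1: "continuous_on {a..c} (\<lambda>x. sin (lam * (c - x)) * sin (lam * (c - x)))" by (intro continuous_intros)
  have c2: "continuous_on {a..c} (\<lambda>x. sin (lam * (c - x)) * sin (lam * (x - a)))" by (intro continuous_intros)
  have "integral {a..c} (\<lambda>x. P x * (sin (lam * (c - x)) / S)) =
        integral {a..c} (\<lambda>x. u / S^2 * (sin (lam * (c - x)) * sin (lam * (c - x))) + v / S^2 * (sin (lam * (c - x)) * sin (lam * (x - a))))"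
  proof (rule Henstock_Kurzweil_Integration.integral_cong)
    fix x assume x: "x \<in> {a..c}"
    have Px: "P x = u * (sin (lam * (c - x)) / S) + v * (sin (lam * (x - a)) / S)" using P_eq[OF x] unfolding S_def th_def by simp
    show "P x * (sin (lam * (c - x)) / S) = u / S^2 * (sin (lam * (c - x)) * sin (lam * (c - x))) + v / S^2 * (sin (lam * (c - x)) * sin (lam * (x - a)))"
      unfolding Px using Spos by (simp add: power2_eq_square field_simps)
  qed
  also have "\<dots> = integral {a..c} (\<lambda>x. u / S^2 * (sin (lam * (c - x)) * sin (lam * (c - x)))) + integral {a..c} (\<lambda>x. v / S^2 * (sin (lam * (c - x)) * sin (lam * (x - a))))"
    by (rule Henstock_Kurzweil_Integration.integral_add; intro integrable_continuous_interval continuous_intros)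
  also have "\<dots> = u / S^2 * J1 + v / S^2 * J2"
    unfolding Henstock_Kurzweil_Integration.integral_mult_right I1 I2 ..
  finally have intP: "integral {a..c} (\<lambda>x. P x * (sin (lam * (c - x)) / S)) = u / S^2 * J1 + v / S^2 * J2" .
  have "\<sigma> * integral {a..c} (\<lambda>x. P x * (sin (lam * (c - x)) / S)) \<ge> \<bar>u\<bar> / 8 * integral {a..c} (\<lambda>x. sin (lam * (c - x)) / S)"
    using seg_core[OF lam Spos J2nn Jineq uv] unfolding intP int0 .
  then show "\<sigma> * integral {a..c} (\<lambda>x. P x * (sin (lam * (c - x)) / sin (lam * (c - a))))
           \<ge> \<bar>u\<bar> / 8 * integral {a..c} (\<lambda>x. sin (lam * (c - x)) / sin (lam * (c - a)))"
    unfolding S_def th_def .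
  have "integral {a..c} (\<lambda>x. sin (lam * (c - x)) / S) > 0"
    unfolding int0 using J0pos Spos by simp
  then show "integral {a..c} (\<lambda>x. sin (lam * (c - x)) / sin (lam * (c - a))) > 0"
    unfolding S_def th_def .
qed

lemma seg_test_right:
  fixes lam a c u v \<sigma> :: real and P :: "real \<Rightarrow> real"
  assumes lam: "lam > 0" and ac: "a < c" and th1: "lam * (c - a) \<le> 1"
    and P_eq: "\<And>x. x \<in> {a..c} \<Longrightarrow> P x = u * (sin (lam * (x - a)) / sin (lam * (c - a))) + v * (sin (lam * (c - x)) / sin (lam * (c - a)))"
    and uv: "\<bar>v\<bar> \<le> \<bar>u\<bar>" "\<sigma> * u = \<bar>u\<bar>" "\<bar>\<sigma>\<bar> = 1"
  shows "\<sigma> * integral {a..c} (\<lambda>x. P x * (sin (lam * (x - a)) / sin (lam * (c - a))))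
           \<ge> \<bar>u\<bar> / 8 * integral {a..c} (\<lambda>x. sin (lam * (x - a)) / sin (lam * (c - a)))"
    and "integral {a..c} (\<lambda>x. sin (lam * (x - a)) / sin (lam * (c - a))) > 0"
proof -
  define th where "th = lam * (c - a)"
  define S where "S = sin th"
  have thpos: "th > 0" using lam ac unfolding th_def by simp
  note T = trig_ineqs[OF thpos th1[folded th_def]]
  have Spos: "S > 0" using T(4) unfolding S_def .
  define J1 where "J1 = ((lam*(c-a))/2 - sin (2*(lam*(c-a)))/4) / lam"
  define J2 where "J2 = (sin (lam*(c-a)) - (lam*(c-a)) * cos (lam*(c-a))) / (2*lam)"
  define J0 where "J0 = (1 - cos (lam*(c-a))) / lam"
  have I1: "integral {a..c} (\<lambda>x. sin (lam * (x - a)) * sin (lam * (x - a))) = J1"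
    unfolding J1_def by (rule int_sq_left) (use lam ac in auto)
  have I2: "integral {a..c} (\<lambda>x. sin (lam * (c - x)) * sin (lam * (x - a))) = J2"
    unfolding J2_def by (rule int_cross) (use lam ac in auto)
  have I0: "integral {a..c} (\<lambda>x. sin (lam * (x - a))) = J0"
    unfolding J0_def by (rule int_left) (use lam ac in auto)
  have J2nn: "J2 \<ge> 0" unfolding J2_def using T(2) lam unfolding th_def by simp
  have J0pos: "J0 > 0" unfolding J0_def using T(3) lam unfolding th_def by simp
  have Jineq: "J1 - J2 \<ge> S * J0 / 8"
  proof -
    have "(th/2 - sin (2*th)/4 - (sin th - th * cos th)/2) / lam \<ge> (sin th * (1 - cos th) / 8) / lam"
      using T(1) lam by (intro divide_right_mono) auto
    moreover have "J1 - J2 = (th/2 - sin (2*th)/4 - (sin th - th * cos th)/2) / lam"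
      unfolding J1_def J2_def th_def using lam by (simp add: field_simps)
    moreover have "S * J0 / 8 = (sin th * (1 - cos th) / 8) / lam"
      unfolding S_def J0_def th_def by simp
    ultimately show ?thesis by simp
  qed
  have int0: "integral {a..c} (\<lambda>x. sin (lam * (x - a)) / S) = J0 / S"
    using I0 by (simp add: divide_inverse_commute Henstock_Kurzweil_Integration.integral_mult_right[of _ "inverse S", symmetric] mult.commute)
  have c1: "continuous_on {a..c} (\<lambda>x. sin (lam * (c - x)) * sin (lam * (c - x)))" by (intro continuous_intros)
  have c2: "continuous_on {a..c} (\<lambda>x. sin (lam * (c - x)) * sin (lam * (x - a)))" by (intro continuous_intros)
  have "integral {a..c} (\<lambda>x. P x * (sin (lam * (x - a)) / S)) =
        integral {a..c} (\<lambda>x. u / S^2 * (sin (lam * (x - a)) * sin (lam * (x - a))) + v / S^2 * (sin (lam * (c - x)) * sin (lam * (x - a))))"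
  proof (rule Henstock_Kurzweil_Integration.integral_cong)
    fix x assume x: "x \<in> {a..c}"
    have Px: "P x = u * (sin (lam * (x - a)) / S) + v * (sin (lam * (c - x)) / S)" using P_eq[OF x] unfolding S_def th_def by simp
    show "P x * (sin (lam * (x - a)) / S) = u / S^2 * (sin (lam * (x - a)) * sin (lam * (x - a))) + v / S^2 * (sin (lam * (c - x)) * sin (lam * (x - a)))"
      unfolding Px using Spos by (simp add: power2_eq_square field_simps)
  qed
  also have "\<dots> = integral {a..c} (\<lambda>x. u / S^2 * (sin (lam * (x - a)) * sin (lam * (x - a)))) + integral {a..c} (\<lambda>x. v / S^2 * (sin (lam * (c - x)) * sin (lam * (x - a))))"
    by (rule Henstock_Kurzweil_Integration.integral_add; intro integrable_continuous_interval continuous_intros)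
  also have "\<dots> = u / S^2 * J1 + v / S^2 * J2"
    unfolding Henstock_Kurzweil_Integration.integral_mult_right I1 I2 ..
  finally have intP: "integral {a..c} (\<lambda>x. P x * (sin (lam * (x - a)) / S)) = u / S^2 * J1 + v / S^2 * J2" .
  have "\<sigma> * integral {a..c} (\<lambda>x. P x * (sin (lam * (x - a)) / S)) \<ge> \<bar>u\<bar> / 8 * integral {a..c} (\<lambda>x. sin (lam * (x - a)) / S)"
    using seg_core[OF lam Spos J2nn Jineq uv] unfolding intP int0 .
  then show "\<sigma> * integral {a..c} (\<lambda>x. P x * (sin (lam * (x - a)) / sin (lam * (c - a))))
           \<ge> \<bar>u\<bar> / 8 * integral {a..c} (\<lambda>x. sin (lam * (x - a)) / sin (lam * (c - a)))"
    unfolding S_def th_def .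
  have "integral {a..c} (\<lambda>x. sin (lam * (x - a)) / S) > 0"
    unfolding int0 using J0pos Spos by simp
  then show "integral {a..c} (\<lambda>x. sin (lam * (x - a)) / sin (lam * (c - a))) > 0"
    unfolding S_def th_def .
qed



lemma trig_sq_identity:
  fixes al be y :: real
  shows "(al * sin y + be * cos y) * (al * sin y + be * cos y) = (al^2 + be^2)/2 + (be^2 - al^2) * cos (2*y) / 2 + al * be * sin (2*y)"
proof -
  have h: "sin y ^ 2 + cos y ^ 2 = 1" by (rule sin_cos_squared_add)
  show ?thesis unfolding sin_double cos_double using h by algebra
qed

lemma big_seg:
  fixes lam a c al be :: real and P :: "real \<Rightarrow> real"
  assumes lam: "lam > 0" and ac: "a \<le> c"
    and P_eq: "\<And>x. x \<in> {a..c} \<Longrightarrow> P x = al * sin (lam * x) + be * cos (lam * x)"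
  shows "(al^2 + be^2) * ((c - a)/2 - 1/lam) \<le> integral {a..c} (\<lambda>x. P x * P x)"
proof -
  define G where "G = (\<lambda>x. (al^2 + be^2) * x / 2 + (be^2 - al^2) * sin (2*(lam*x)) / (4*lam) - al * be * cos (2*(lam*x)) / (2*lam))"
  have "integral {a..c} (\<lambda>x. P x * P x) = integral {a..c} (\<lambda>x. (al * sin (lam * x) + be * cos (lam * x)) * (al * sin (lam * x) + be * cos (lam * x)))"
    by (rule Henstock_Kurzweil_Integration.integral_cong) (simp add: P_eq)
  also have "\<dots> = G c - G a"
  proof (rule ftc_real(1)[OF ac])
    fix x assume "x \<in> {a..c}"
    show "(G has_real_derivative (al * sin (lam * x) + be * cos (lam * x)) * (al * sin (lam * x) + be * cos (lam * x))) (at x)"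
      unfolding trig_sq_identity G_def using lam
      by (auto intro!: derivative_eq_intros simp: field_simps)
  qed
  finally have I: "integral {a..c} (\<lambda>x. P x * P x) = G c - G a" .
  define D1 where "D1 = sin (2*(lam*c)) - sin (2*(lam*a))"
  define D2 where "D2 = cos (2*(lam*c)) - cos (2*(lam*a))"
  have D1b: "\<bar>D1\<bar> \<le> 2" unfolding D1_def
    using abs_sin_le_one[of "2*(lam*c)"] abs_sin_le_one[of "2*(lam*a)"] by linarith
  have D2b: "\<bar>D2\<bar> \<le> 2" unfolding D2_def
    using abs_cos_le_one[of "2*(lam*c)"] abs_cos_le_one[of "2*(lam*a)"] by linarith
  have GG: "G c - G a = (al^2 + be^2) * (c - a) / 2 + (be^2 - al^2) * D1 / (4*lam) - al * be * D2 / (2*lam)"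
    unfolding G_def D1_def D2_def using lam by (simp add: field_simps)
  have ab: "2 * \<bar>al * be\<bar> \<le> al^2 + be^2"
  proof -
    have "0 \<le> (\<bar>al\<bar> - \<bar>be\<bar>)^2" by simp
    then show ?thesis by (simp add: power2_eq_square algebra_simps abs_mult)
  qed
  have t1: "\<bar>(be^2 - al^2) * D1\<bar> \<le> 2 * (al^2 + be^2)"
  proof -
    have "\<bar>(be^2 - al^2) * D1\<bar> = \<bar>be^2 - al^2\<bar> * \<bar>D1\<bar>" by (simp add: abs_mult)
    also have "\<dots> \<le> (al^2 + be^2) * 2"
    proof -
      have sq: "\<bar>be^2 - al^2\<bar> \<le> al^2 + be^2" unfolding abs_le_iff
        using zero_le_power2[of al] zero_le_power2[of be] by linarith
      show ?thesis using D1b sq by (intro mult_mono) auto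
    qed
    finally show ?thesis by simp
  qed
  have t2: "\<bar>al * be * D2\<bar> \<le> al^2 + be^2"
  proof -
    have "\<bar>al * be * D2\<bar> = \<bar>al * be\<bar> * \<bar>D2\<bar>" by (simp add: abs_mult)
    also have "\<dots> \<le> \<bar>al * be\<bar> * 2"
      using D2b by (intro mult_left_mono) auto
    finally show ?thesis using ab by simp
  qed
  have t1': "(be^2 - al^2) * D1 / (4*lam) \<ge> - (al^2 + be^2) / (2*lam)"
  proof -
    have "(be^2 - al^2) * D1 \<ge> - (2 * (al^2 + be^2))" using t1 by linarith
    then have "(be^2 - al^2) * D1 / (4*lam) \<ge> - (2 * (al^2 + be^2)) / (4*lam)" using lam by (intro divide_right_mono) auto
    moreover have "- (2 * (al^2 + be^2)) / (4*lam) = - (al^2 + be^2) / (2*lam)" using lam by (simp add: field_simps)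
    ultimately show ?thesis by simp
  qed
  have t2': "al * be * D2 / (2*lam) \<le> (al^2 + be^2) / (2*lam)"
  proof -
    have "al * be * D2 \<le> al^2 + be^2" using t2 by linarith
    then show ?thesis using lam by (intro divide_right_mono) auto
  qed
  have "(al^2 + be^2) * ((c - a)/2 - 1/lam) = (al^2 + be^2) * (c - a) / 2 - (al^2 + be^2) / (2*lam) - (al^2 + be^2) / (2*lam)"
    using lam by (simp add: field_simps)
  also have "\<dots> \<le> G c - G a" unfolding GG using t1' t2' by linarith
  finally show ?thesis unfolding I .
qed

lemma cs_2d:
  fixes al be s c :: real
  assumes "s^2 + c^2 = 1"
  shows "(al * s + be * c)^2 \<le> al^2 + be^2"
proof -
  have "(al * s + be * c)^2 + (al * c - be * s)^2 = (al^2 + be^2) * (s^2 + c^2)"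
    by (simp add: power2_eq_square algebra_simps)
  then have "(al * s + be * c)^2 + (al * c - be * s)^2 = al^2 + be^2" using assms by simp
  then show ?thesis using zero_le_power2[of "al * c - be * s"] by linarith
qed

definition hat :: "real \<Rightarrow> nat \<Rightarrow> (nat \<Rightarrow> real) \<Rightarrow> nat \<Rightarrow> real \<Rightarrow> real" where
  "hat lam n t k x = (if 1 < k \<and> t (k-1) \<le> x \<and> x \<le> t k then sin (lam * (x - t (k-1))) / sin (lam * (t k - t (k-1)))
     else if k < n \<and> t k \<le> x \<and> x \<le> t (Suc k) then sin (lam * (t (Suc k) - x)) / sin (lam * (t (Suc k) - t k)) else 0)"

locale ptn =
  fixes lam :: real and n :: nat and t :: "nat \<Rightarrow> real"
  assumes lam: "lam > 0" and part: "is_partition (pi/lam) n t"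
begin

lemma n2: "2 \<le> n" and t1: "t 1 = 0" and tn: "t n = pi/lam" and inc: "\<And>i. i \<in> {1..<n} \<Longrightarrow> t i < t (Suc i)"
  using part unfolding is_partition_def by auto

lemma mono_lt: "1 \<le> i \<Longrightarrow> i < k \<Longrightarrow> k \<le> n \<Longrightarrow> t i < t k"
proof (induction k)
  case 0 then show ?case by simp
next
  case (Suc k)
  show ?case
  proof (cases "i = k")
    case True then show ?thesis using inc[of k] Suc.prems by auto
  next
    case False
    then have "t i < t k" using Suc by auto
    also have "t k < t (Suc k)" using inc[of k] Suc.prems False by auto
    finally show ?thesis .
  qed
qed

lemma lt_iff: "1 \<le> i \<Longrightarrow> i \<le> n \<Longrightarrow> 1 \<le> k \<Longrightarrow> k \<le> n \<Longrightarrow> t i < t k \<longleftrightarrow> i < k"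
proof -
  assume a: "1 \<le> i" "i \<le> n" "1 \<le> k" "k \<le> n"
  show ?thesis
  proof (cases "i < k")
    case True then show ?thesis using mono_lt[of i k] a by auto
  next
    case False
    then have "k < i \<or> k = i" by auto
    then show ?thesis using mono_lt[of k i] a False by auto
  qed
qed

lemma le_iff: "1 \<le> i \<Longrightarrow> i \<le> n \<Longrightarrow> 1 \<le> k \<Longrightarrow> k \<le> n \<Longrightarrow> t i \<le> t k \<longleftrightarrow> i \<le> k"
  using lt_iff[of k i] by linarith

lemma t_range: "1 \<le> i \<Longrightarrow> i \<le> n \<Longrightarrow> 0 \<le> t i \<and> t i \<le> pi/lam"
  using le_iff[of 1 i] le_iff[of i n] t1 tn n2 by auto


lemma cover_gen:
  assumes "2 \<le> m" "m \<le> n" "t 1 \<le> x" "x \<le> t m"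
  shows "\<exists>i\<in>{1..<m}. t i \<le> x \<and> x \<le> t (Suc i)"
  using assms
proof (induction m rule: nat_induct_at_least)
  case base then show ?case by (intro bexI[of _ 1]) (auto simp: numeral_2_eq_2)
next
  case (Suc m)
  show ?case
  proof (cases "x \<le> t m")
    case True then show ?thesis using Suc by fastforce
  next
    case False then show ?thesis using Suc by (intro bexI[of _ m]) auto
  qed
qed

lemma cover: "x \<in> {0..pi/lam} \<Longrightarrow> \<exists>i\<in>{1..<n}. t i \<le> x \<and> x \<le> t (Suc i)"
  using cover_gen[of n x] n2 t1 tn by auto

lemma interval_Union: "{0..pi/lam} = (\<Union>i\<in>{1..<n}. {t i..t (Suc i)})"
proof
  show "{0..pi/lam} \<subseteq> (\<Union>i\<in>{1..<n}. {t i..t (Suc i)})" using cover by fastforce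
  show "(\<Union>i\<in>{1..<n}. {t i..t (Suc i)}) \<subseteq> {0..pi/lam}"
  proof
    fix x assume "x \<in> (\<Union>i\<in>{1..<n}. {t i..t (Suc i)})"
    then obtain i where i: "i \<in> {1..<n}" "t i \<le> x" "x \<le> t (Suc i)" by auto
    then show "x \<in> {0..pi/lam}" using t_range[of i] t_range[of "Suc i"] by auto
  qed
qed

end

locale spl = ptn +
  assumes seg: "\<And>i. i \<in> {1..<n} \<Longrightarrow> lam * (t (Suc i) - t i) < pi"
begin

lemma seg_sin_pos: "i \<in> {1..<n} \<Longrightarrow> sin (lam * (t (Suc i) - t i)) > 0"
  using seg[of i] inc[of i] lam by (intro sin_gt_zero) auto

definition pw :: "(real \<Rightarrow> real) \<Rightarrow> bool" where
  "pw s \<longleftrightarrow> (\<forall>i\<in>{1..<n}. \<exists>\<alpha> \<beta>. \<forall>x\<in>{t i..t (Suc i)}. s x = \<alpha> * sin (lam * x) + \<beta> * cos (lam * x))"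

lemma pw_cont: assumes "pw s" shows "continuous_on {0..pi/lam} s"
proof -
  have "continuous_on (\<Union>i\<in>{1..<n}. {t i..t (Suc i)}) s"
  proof (rule continuous_on_closed_Union)
    fix i assume i: "i \<in> {1..<n}"
    then obtain \<alpha> \<beta> where ab: "\<forall>x\<in>{t i..t (Suc i)}. s x = \<alpha> * sin (lam * x) + \<beta> * cos (lam * x)"
      using assms unfolding pw_def by blast
    have "continuous_on {t i..t (Suc i)} (\<lambda>x. \<alpha> * sin (lam * x) + \<beta> * cos (lam * x))"
      by (intro continuous_intros)
    then show "continuous_on {t i..t (Suc i)} s" using continuous_on_eq ab by (metis (no_types, lifting))
  qed auto
  then show ?thesis using interval_Union by simp
qed

lemma space_iff: "s \<in> trig_spline_space lam n t \<longleftrightarrow> pw s"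
  unfolding trig_spline_space_def pw_def[symmetric] using pw_cont by auto

lemma space_lin:
  assumes "v \<in> trig_spline_space lam n t" "w \<in> trig_spline_space lam n t"
  shows "(\<lambda>x. a * v x + b * w x) \<in> trig_spline_space lam n t"
  unfolding space_iff pw_def
proof
  fix i assume i: "i \<in> {1..<n}"
  obtain \<alpha>1 \<beta>1 where 1: "\<forall>x\<in>{t i..t (Suc i)}. v x = \<alpha>1 * sin (lam * x) + \<beta>1 * cos (lam * x)"
    using assms(1) i unfolding space_iff pw_def by blast
  obtain \<alpha>2 \<beta>2 where 2: "\<forall>x\<in>{t i..t (Suc i)}. w x = \<alpha>2 * sin (lam * x) + \<beta>2 * cos (lam * x)"
    using assms(2) i unfolding space_iff pw_def by blast
  show "\<exists>\<alpha> \<beta>. \<forall>x\<in>{t i..t (Suc i)}. a * v x + b * w x = \<alpha> * sin (lam * x) + \<beta> * cos (lam * x)"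
    by (rule exI[of _ "a*\<alpha>1 + b*\<alpha>2"], rule exI[of _ "a*\<beta>1 + b*\<beta>2"]) (use 1 2 in \<open>auto simp: algebra_simps\<close>)
qed

lemma space_zero: "(\<lambda>x. 0) \<in> trig_spline_space lam n t"
  unfolding space_iff pw_def by (auto intro!: exI[of _ 0])

lemma space_cont: "s \<in> trig_spline_space lam n t \<Longrightarrow> continuous_on {0..pi/lam} s"
  unfolding trig_spline_space_def by auto


abbreviation phi where "phi \<equiv> hat lam n t"

lemma hat_left: "1 < k \<Longrightarrow> k \<le> n \<Longrightarrow> x \<in> {t (k-1)..t k} \<Longrightarrow>
    phi k x = sin (lam * (x - t (k-1))) / sin (lam * (t k - t (k-1)))"
  by (simp add: hat_def)

lemma hat_right:
  assumes "1 \<le> k" "k < n" "x \<in> {t k..t (Suc k)}"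
  shows "phi k x = sin (lam * (t (Suc k) - x)) / sin (lam * (t (Suc k) - t k))"
proof (cases "1 < k \<and> t (k-1) \<le> x \<and> x \<le> t k")
  case True
  then have x: "x = t k" using assms by auto
  have km: "k - 1 \<in> {1..<n}" "Suc (k-1) = k" using True assms by auto
  have "sin (lam * (t (Suc (k-1)) - t (k-1))) > 0" using seg_sin_pos[OF km(1)] .
  then have s1: "sin (lam * (t k - t (k-1))) \<noteq> 0" using True by auto
  have s2: "sin (lam * (t (Suc k) - t k)) \<noteq> 0" using seg_sin_pos[of k] assms by auto
  show ?thesis using True s1 s2 unfolding hat_def x by simp
next
  case False
  then show ?thesis using assms unfolding hat_def by auto
qed

lemma hat_zero:
  assumes k: "1 \<le> k" "k \<le> n" and i: "i \<in> {1..<n}" and ki: "k \<noteq> i" "k \<noteq> Suc i"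
    and x: "x \<in> {t i..t (Suc i)}"
  shows "phi k x = 0"
proof -
  consider (A) "k < i" | (B) "Suc i < k" using ki by linarith
  then show ?thesis
  proof cases
    case A
    have c1: "\<not> (t (k-1) \<le> x \<and> x \<le> t k)" using mono_lt[of k i] A k i x by auto
    show ?thesis
    proof (cases "Suc k = i")
      case True
      then have "t k \<le> x \<and> x \<le> t (Suc k) \<longrightarrow> x = t (Suc k)" using x by auto
      then show ?thesis using c1 unfolding hat_def by auto
    next
      case False
      then have "t (Suc k) < t i" using mono_lt[of "Suc k" i] A k i by auto
      then have "\<not> (t k \<le> x \<and> x \<le> t (Suc k))" using x by auto
      then show ?thesis using c1 unfolding hat_def by auto
    qed
  next
    case B
    have c2: "\<not> (t k \<le> x \<and> x \<le> t (Suc k))" using mono_lt[of "Suc i" k] B k i x by auto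
    show ?thesis
    proof (cases "k - 1 = Suc i")
      case True
      then have "t (k-1) \<le> x \<and> x \<le> t k \<longrightarrow> x = t (k-1)" using x by auto
      then show ?thesis using c2 unfolding hat_def by auto
    next
      case False
      then have "t (Suc i) < t (k-1)" using mono_lt[of "Suc i" "k-1"] B k i by auto
      then have "\<not> (t (k-1) \<le> x \<and> x \<le> t k)" using x by auto
      then show ?thesis using c2 unfolding hat_def by auto
    qed
  qed
qed

lemma hat_nonneg:
  assumes "1 \<le> k" "k \<le> n"
  shows "phi k x \<ge> 0"
proof -
  have A: "sin (lam * (x - t (k-1))) / sin (lam * (t k - t (k-1))) \<ge> 0" if h: "1 < k" "t (k-1) \<le> x" "x \<le> t k"
  proof -
    have i: "k - 1 \<in> {1..<n}" "Suc (k-1) = k" using h assms by auto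
    have sp: "sin (lam * (t k - t (k-1))) > 0" using seg_sin_pos[OF i(1)] i(2) by simp
    have "lam * (x - t (k-1)) \<le> lam * (t k - t (k-1))" using lam h by (intro mult_left_mono) auto
    then have "lam * (x - t (k-1)) \<le> pi" using seg[OF i(1)] i(2) by simp
    moreover have "0 \<le> lam * (x - t (k-1))" using lam h by simp
    ultimately have "sin (lam * (x - t (k-1))) \<ge> 0" by (intro sin_ge_zero)
    then show ?thesis using sp by simp
  qed
  have B: "sin (lam * (t (Suc k) - x)) / sin (lam * (t (Suc k) - t k)) \<ge> 0" if h: "k < n" "t k \<le> x" "x \<le> t (Suc k)"
  proof -
    have i: "k \<in> {1..<n}" using h assms by auto
    have sp: "sin (lam * (t (Suc k) - t k)) > 0" using seg_sin_pos[OF i(1)] by simp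
    have "lam * (t (Suc k) - x) \<le> lam * (t (Suc k) - t k)" using lam h by (intro mult_left_mono) auto
    then have "lam * (t (Suc k) - x) \<le> pi" using seg[OF i(1)] by simp
    moreover have "0 \<le> lam * (t (Suc k) - x)" using lam h by simp
    ultimately have "sin (lam * (t (Suc k) - x)) \<ge> 0" by (intro sin_ge_zero)
    then show ?thesis using sp by simp
  qed
  show ?thesis unfolding hat_def using A B by auto
qed

lemma sin_shift1: fixes l x a S :: real shows "sin (l * (x - a)) / S = (cos (l * a) / S) * sin (l * x) + (- sin (l * a) / S) * cos (l * x)"
  by (simp add: right_diff_distrib sin_diff diff_divide_distrib algebra_simps)

lemma sin_shift2: fixes l x c S :: real shows "sin (l * (c - x)) / S = (- cos (l * c) / S) * sin (l * x) + (sin (l * c) / S) * cos (l * x)"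
  by (simp add: right_diff_distrib sin_diff diff_divide_distrib algebra_simps)

lemma hat_in_space:
  assumes k: "1 \<le> k" "k \<le> n"
  shows "phi k \<in> trig_spline_space lam n t"
  unfolding space_iff pw_def
proof
  fix i assume i: "i \<in> {1..<n}"
  show "\<exists>\<alpha> \<beta>. \<forall>x\<in>{t i..t (Suc i)}. phi k x = \<alpha> * sin (lam * x) + \<beta> * cos (lam * x)"
  proof (cases "k = Suc i")
    case True
    then have "\<forall>x\<in>{t i..t (Suc i)}. phi k x = sin (lam * (x - t i)) / sin (lam * (t (Suc i) - t i))"
      using hat_left[of k] k i by auto
    then show ?thesis unfolding sin_shift1 by blast
  next
    case False
    show ?thesis
    proof (cases "k = i")
      case True
      then have "\<forall>x\<in>{t i..t (Suc i)}. phi k x = sin (lam * (t (Suc i) - x)) / sin (lam * (t (Suc i) - t i))"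
        using hat_right[of k] k i by auto
      then show ?thesis unfolding sin_shift2 by blast
    next
      case False2: False
      then have "\<forall>x\<in>{t i..t (Suc i)}. phi k x = 0 * sin (lam * x) + 0 * cos (lam * x)"
        using hat_zero[OF k i] False by auto
      then show ?thesis by blast
    qed
  qed
qed

lemma interp_identity:
  fixes al be l x a c :: real
  shows "(al * sin (l*x) + be * cos (l*x)) * sin (l * (c - a)) =
     (al * sin (l*a) + be * cos (l*a)) * sin (l * (c - x)) + (al * sin (l*c) + be * cos (l*c)) * sin (l * (x - a))"
  by (simp add: right_diff_distrib sin_diff cos_diff algebra_simps)

lemma repr:
  assumes s: "s \<in> trig_spline_space lam n t" and x: "x \<in> {0..pi/lam}" "x \<notin> t ` {1..n}"
  shows "s x = (\<Sum>k\<in>{1..n}. s (t k) * phi k x)"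
proof -
  obtain i where i: "i \<in> {1..<n}" "t i \<le> x" "x \<le> t (Suc i)" using cover[OF x(1)] by blast
  have xi: "x \<in> {t i..t (Suc i)}" using i by auto
  have "(\<Sum>k\<in>{1..n}. s (t k) * phi k x) = (\<Sum>k\<in>{i, Suc i}. s (t k) * phi k x)"
    by (rule sum.mono_neutral_right) (use i hat_zero[OF _ _ i(1) _ _ xi] in auto)
  also have "\<dots> = s (t i) * phi i x + s (t (Suc i)) * phi (Suc i) x" by simp
  also have "phi i x = sin (lam * (t (Suc i) - x)) / sin (lam * (t (Suc i) - t i))"
    using hat_right[of i] i by auto
  also have "phi (Suc i) x = sin (lam * (x - t i)) / sin (lam * (t (Suc i) - t i))"
    using hat_left[of "Suc i"] i by auto
  finally have E: "(\<Sum>k\<in>{1..n}. s (t k) * phi k x) =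
      s (t i) * (sin (lam * (t (Suc i) - x)) / sin (lam * (t (Suc i) - t i))) +
      s (t (Suc i)) * (sin (lam * (x - t i)) / sin (lam * (t (Suc i) - t i)))" .
  obtain al be where ab: "\<forall>y\<in>{t i..t (Suc i)}. s y = al * sin (lam * y) + be * cos (lam * y)"
    using s i(1) unfolding space_iff pw_def by blast
  have Sne: "sin (lam * (t (Suc i) - t i)) \<noteq> 0" using seg_sin_pos[OF i(1)] by simp
  have si: "s (t i) = al * sin (lam * t i) + be * cos (lam * t i)" using ab inc[OF i(1)] by auto
  have si1: "s (t (Suc i)) = al * sin (lam * t (Suc i)) + be * cos (lam * t (Suc i))" using ab inc[OF i(1)] by auto
  have sx: "s x = al * sin (lam * x) + be * cos (lam * x)" using ab xi by auto
  have "s x * sin (lam * (t (Suc i) - t i)) = s (t i) * sin (lam * (t (Suc i) - x)) + s (t (Suc i)) * sin (lam * (x - t i))"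
    unfolding sx si si1 by (rule interp_identity)
  then show ?thesis unfolding E using Sne by (simp add: field_simps)
qed


lemma hat_cont: "1 \<le> k \<Longrightarrow> k \<le> n \<Longrightarrow> continuous_on {0..pi/lam} (phi k)"
  using space_cont hat_in_space by blast

lemma proj_exists:
  assumes f: "continuous_on {0..pi/lam} f"
  shows "\<exists>p. p \<in> trig_spline_space lam n t \<and> (\<forall>s\<in>trig_spline_space lam n t. L2_inner lam f s = L2_inner lam p s)"
proof -
  have bpos: "0 < pi/lam" using lam by simp
  have gsV: "set (map phi [1..<Suc n]) \<subseteq> trig_spline_space lam n t"
    using hat_in_space by auto
  obtain p where pV: "p \<in> trig_spline_space lam n t"
    and po: "\<forall>g\<in>set (map phi [1..<Suc n]). ipr 0 (pi/lam) (\<lambda>x. f x - p x) g = 0"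
    using gram_schmidt[of "trig_spline_space lam n t" 0 "pi/lam", OF space_cont space_zero space_lin bpos gsV f] by blast
  have po': "\<And>k. k \<in> {1..n} \<Longrightarrow> ipr 0 (pi/lam) (\<lambda>x. f x - p x) (phi k) = 0"
    using po by auto
  have pc: "continuous_on {0..pi/lam} p" using space_cont[OF pV] .
  have fpc: "continuous_on {0..pi/lam} (\<lambda>x. f x - p x)" using f pc by (intro continuous_intros)
  show ?thesis
  proof (intro exI conjI ballI)
    show "p \<in> trig_spline_space lam n t" by fact
    fix s assume sV: "s \<in> trig_spline_space lam n t"
    have sc: "continuous_on {0..pi/lam} s" using space_cont[OF sV] .
    have "L2_inner lam f s - L2_inner lam p s = integral {0..pi/lam} (\<lambda>x. f x * s x - p x * s x)"
      unfolding L2_inner_def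
      by (rule Henstock_Kurzweil_Integration.integral_diff[symmetric]; intro integrable_continuous_interval continuous_intros f pc sc)
    also have "\<dots> = integral {0..pi/lam} (\<lambda>x. (f x - p x) * (\<Sum>k\<in>{1..n}. s (t k) * phi k x))"
    proof (rule integral_spike[of "t ` {1..n}"])
      show "negligible (t ` {1..n})" by (intro negligible_finite) auto
      fix x assume "x \<in> {0..pi/lam} - t ` {1..n}"
      then show "(f x - p x) * (\<Sum>k\<in>{1..n}. s (t k) * phi k x) = f x * s x - p x * s x"
        using repr[OF sV, of x] by (auto simp: algebra_simps)
    qed
    also have "\<dots> = integral {0..pi/lam} (\<lambda>x. \<Sum>k\<in>{1..n}. s (t k) * ((f x - p x) * phi k x))"
      by (simp add: sum_distrib_left algebra_simps)
    also have "\<dots> = (\<Sum>k\<in>{1..n}. integral {0..pi/lam} (\<lambda>x. s (t k) * ((f x - p x) * phi k x)))"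
      by (rule integral_sum) (auto intro!: integrable_continuous_interval continuous_intros fpc hat_cont)
    also have "\<dots> = (\<Sum>k\<in>{1..n}. s (t k) * ipr 0 (pi/lam) (\<lambda>x. f x - p x) (phi k))"
      unfolding ipr_def Henstock_Kurzweil_Integration.integral_mult_right ..
    also have "\<dots> = 0" using po' by simp
    finally show "L2_inner lam f s = L2_inner lam p s" by simp
  qed
qed

lemma proj_spec:
  assumes f: "continuous_on {0..pi/lam} f"
  shows "spline_proj lam n t f \<in> trig_spline_space lam n t"
    "\<And>s. s \<in> trig_spline_space lam n t \<Longrightarrow> L2_inner lam f s = L2_inner lam (spline_proj lam n t f) s"
  using someI_ex[OF proj_exists[OF f]] unfolding spline_proj_def by auto

end

context spl begin

lemma seg_interp:
  assumes s: "s \<in> trig_spline_space lam n t" and i: "i \<in> {1..<n}" and xi: "x \<in> {t i..t (Suc i)}"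
  shows "s x = s (t i) * (sin (lam * (t (Suc i) - x)) / sin (lam * (t (Suc i) - t i))) +
      s (t (Suc i)) * (sin (lam * (x - t i)) / sin (lam * (t (Suc i) - t i)))"
proof -
  obtain al be where ab: "\<forall>y\<in>{t i..t (Suc i)}. s y = al * sin (lam * y) + be * cos (lam * y)"
    using s i unfolding space_iff pw_def by blast
  have Sne: "sin (lam * (t (Suc i) - t i)) \<noteq> 0" using seg_sin_pos[OF i] by simp
  have si: "s (t i) = al * sin (lam * t i) + be * cos (lam * t i)" using ab inc[OF i] by auto
  have si1: "s (t (Suc i)) = al * sin (lam * t (Suc i)) + be * cos (lam * t (Suc i))" using ab inc[OF i] by auto
  have sx: "s x = al * sin (lam * x) + be * cos (lam * x)" using ab xi by auto
  have "s x * sin (lam * (t (Suc i) - t i)) = s (t i) * sin (lam * (t (Suc i) - x)) + s (t (Suc i)) * sin (lam * (x - t i))"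
    unfolding sx si si1 by (rule interp_identity)
  then show ?thesis using Sne by (simp add: field_simps)
qed

end

locale spl2 = ptn +
  fixes j :: nat and eps :: real
  assumes j: "j \<in> {1..<n}" and eps: "eps > 0" "lam * eps \<le> 1/10"
    and segj: "t (Suc j) - t j = pi/lam - eps"
begin

lemma small_seg:
  assumes i: "i \<in> {1..<n}" "i \<noteq> j"
  shows "t (Suc i) - t i \<le> eps"
proof (cases "i < j")
  case True
  have "t (Suc i) \<le> t j" using le_iff[of "Suc i" j] True i j by auto
  moreover have "t i \<ge> 0" using t_range[of i] i by auto
  moreover have "t (Suc j) \<le> pi/lam" using t_range[of "Suc j"] j by auto
  ultimately show ?thesis using segj by linarith
next
  case False
  then have "j < i" using i by auto
  then have "t (Suc j) \<le> t i" using le_iff[of "Suc j" i] i j by auto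
  moreover have "t j \<ge> 0" using t_range[of j] j by auto
  moreover have "t (Suc i) \<le> pi/lam" using t_range[of "Suc i"] i by auto
  ultimately show ?thesis using segj by linarith
qed

lemma small_seg_th: "i \<in> {1..<n} \<Longrightarrow> i \<noteq> j \<Longrightarrow> lam * (t (Suc i) - t i) \<le> 1/10"
  using small_seg[of i] lam eps mult_left_mono[of "t (Suc i) - t i" eps lam] by linarith

lemma seg_all: "i \<in> {1..<n} \<Longrightarrow> lam * (t (Suc i) - t i) < pi"
proof (cases "i = j")
  case True
  then show ?thesis using segj lam eps by (simp add: right_diff_distrib)
next
  case False
  assume "i \<in> {1..<n}"
  then show ?thesis using small_seg_th[of i] False pi_gt3 by linarith
qed

sublocale spl
  by unfold_locales (rule seg_all)


lemma divcancel: fixes A B k q l :: real assumes "0 < l" "A * (k / l) \<le> B * (q / l)" shows "A * k \<le> B * q"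
proof -
  have "(A * k) / l \<le> (B * q) / l" using assms(2) by (simp only: times_divide_eq_right)
  then show ?thesis using assms(1) divide_le_cancel by blast
qed

lemma lin_helper: fixes X Y Z :: real assumes "X * (45/100) \<le> Y" "Y \<le> Z * 4" "0 \<le> Z" shows "X \<le> 9 * Z"
  using assms by linarith

lemma half_helper: fixes y :: real assumes "29/10 \<le> y" shows "45/100 \<le> y / 2 - 1"
  using assms by linarith

lemma sup_norm_bound:
  assumes f: "continuous_on {0..pi/lam} f" and x: "x \<in> {0..pi/lam}"
  shows "\<bar>f x\<bar> \<le> sup_norm lam f"
proof -
  have "compact ((\<lambda>x. \<bar>f x\<bar>) ` {0..pi/lam})"
    by (rule compact_continuous_image) (auto intro!: continuous_intros f)
  then have "bdd_above ((\<lambda>x. \<bar>f x\<bar>) ` {0..pi/lam})"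
    by (intro bounded_imp_bdd_above compact_imp_bounded)
  then show ?thesis unfolding sup_norm_def using x by (rule cSUP_upper[rotated])
qed

lemma sup_norm_nonneg:
  assumes f: "continuous_on {0..pi/lam} f"
  shows "sup_norm lam f \<ge> 0"
  using sup_norm_bound[OF f, of 0] lam by (auto intro: order_trans[OF abs_ge_zero])

lemma energy:
  assumes f: "continuous_on {0..pi/lam} f"
  defines "p \<equiv> spline_proj lam n t f"
  shows "ipr 0 (pi/lam) p p \<le> (sup_norm lam f)^2 * (pi/lam)"
proof -
  define M where "M = sup_norm lam f"
  have pV: "p \<in> trig_spline_space lam n t" unfolding p_def by (rule proj_spec(1)[OF f])
  have pc: "continuous_on {0..pi/lam} p" using space_cont[OF pV] .
  have fp: "ipr 0 (pi/lam) f p = ipr 0 (pi/lam) p p"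
    using proj_spec(2)[OF f pV] unfolding p_def L2_inner_def ipr_def by simp
  have "0 \<le> integral {0..pi/lam} (\<lambda>x. (f x - p x) * (f x - p x))"
    by (rule integral_nonneg) (auto intro!: integrable_continuous_interval continuous_intros f pc)
  also have "\<dots> = integral {0..pi/lam} (\<lambda>x. (f x * f x + p x * p x) - 2 * (f x * p x))"
    by (rule Henstock_Kurzweil_Integration.integral_cong) (simp add: algebra_simps)
  also have "\<dots> = integral {0..pi/lam} (\<lambda>x. f x * f x + p x * p x) - integral {0..pi/lam} (\<lambda>x. 2 * (f x * p x))"
    by (rule Henstock_Kurzweil_Integration.integral_diff; intro integrable_continuous_interval continuous_intros f pc)
  also have "integral {0..pi/lam} (\<lambda>x. f x * f x + p x * p x) = ipr 0 (pi/lam) f f + ipr 0 (pi/lam) p p"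
    unfolding ipr_def
    by (rule Henstock_Kurzweil_Integration.integral_add; intro integrable_continuous_interval continuous_intros f pc)
  also have "integral {0..pi/lam} (\<lambda>x. 2 * (f x * p x)) = 2 * ipr 0 (pi/lam) f p"
    unfolding ipr_def by (rule Henstock_Kurzweil_Integration.integral_mult_right)
  finally have "ipr 0 (pi/lam) p p \<le> ipr 0 (pi/lam) f f" using fp by simp
  also have "ipr 0 (pi/lam) f f \<le> integral {0..pi/lam} (\<lambda>x. M * M)"
    unfolding ipr_def
  proof (rule integral_le)
    show "(\<lambda>x. f x * f x) integrable_on {0..pi/lam}" by (intro integrable_continuous_interval continuous_intros f)
    show "(\<lambda>x. M * M) integrable_on {0..pi/lam}" by (intro integrable_continuous_interval continuous_intros)
    fix x assume x: "x \<in> {0..pi/lam}"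
    have "\<bar>f x\<bar> \<le> M" unfolding M_def by (rule sup_norm_bound[OF f x])
    then have "\<bar>f x\<bar> * \<bar>f x\<bar> \<le> M * M" by (intro mult_mono) auto
    then show "f x * f x \<le> M * M" by (simp add: abs_mult[symmetric])
  qed
  also have "\<dots> = M^2 * (pi/lam)" using lam by (simp add: power2_eq_square)
  finally show ?thesis unfolding M_def .
qed

lemma big_end_bound:
  assumes f: "continuous_on {0..pi/lam} f"
  defines "p \<equiv> spline_proj lam n t f"
  shows "\<bar>p (t j)\<bar> \<le> 3 * sup_norm lam f" "\<bar>p (t (Suc j))\<bar> \<le> 3 * sup_norm lam f"
proof -
  define M where "M = sup_norm lam f"
  have M0: "M \<ge> 0" unfolding M_def by (rule sup_norm_nonneg[OF f])
  have pV: "p \<in> trig_spline_space lam n t" unfolding p_def by (rule proj_spec(1)[OF f])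
  have pc: "continuous_on {0..pi/lam} p" using space_cont[OF pV] .
  define a where "a = t j"
  define c where "c = t (Suc j)"
  obtain al be where ab: "\<forall>y\<in>{a..c}. p y = al * sin (lam * y) + be * cos (lam * y)"
    using pV j unfolding space_iff pw_def a_def c_def by blast
  have ac: "a \<le> c" using inc[OF j] unfolding a_def c_def by simp
  have sub: "{a..c} \<subseteq> {0..pi/lam}" using t_range[of j] t_range[of "Suc j"] j unfolding a_def c_def by auto
  have "(al^2 + be^2) * ((c - a)/2 - 1/lam) \<le> integral {a..c} (\<lambda>x. p x * p x)"
    by (rule big_seg[OF lam ac]) (use ab in auto)
  also have "\<dots> \<le> integral {0..pi/lam} (\<lambda>x. p x * p x)"
  proof (rule integral_subset_le[OF sub])
    show "(\<lambda>x. p x * p x) integrable_on {a..c}"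
      by (intro integrable_continuous_interval continuous_intros continuous_on_subset[OF pc sub])
    show "(\<lambda>x. p x * p x) integrable_on {0..pi/lam}"
      by (intro integrable_continuous_interval continuous_intros pc)
  qed auto
  also have "\<dots> \<le> M^2 * (pi/lam)" using energy[OF f] unfolding ipr_def M_def p_def .
  finally have E: "(al^2 + be^2) * ((c - a)/2 - 1/lam) \<le> M^2 * (pi/lam)" .
  have ca: "(c - a)/2 - 1/lam \<ge> (45/100) / lam"
  proof -
    have cae: "c - a = pi/lam - eps" using segj unfolding a_def c_def by simp
    have "lam * ((c - a)/2 - 1/lam) = lam * ((pi/lam - eps)/2 - 1/lam)" by (simp only: cae)
    also have "\<dots> = (pi - lam * eps)/2 - 1" using lam by (simp add: field_simps)
    also have "\<dots> \<ge> 45/100"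
    proof -
      have "pi - lam * eps \<ge> 29/10" using pi_gt3 eps by linarith
      then show ?thesis by (rule half_helper)
    qed
    finally have "lam * ((c - a)/2 - 1/lam) \<ge> 45/100" .
    then have "(45/100)/lam \<le> (lam * ((c - a)/2 - 1/lam))/lam" using lam by (intro divide_right_mono) auto
    moreover have "(lam * ((c - a)/2 - 1/lam))/lam = (c - a)/2 - 1/lam"
      using lam by (subst mult.commute) (rule nonzero_mult_div_cancel_right, simp)
    ultimately show ?thesis by simp
  qed
  have "(al^2 + be^2) * ((45/100) / lam) \<le> (al^2 + be^2) * ((c - a)/2 - 1/lam)"
    using ca by (intro mult_left_mono) auto
  then have "(al^2 + be^2) * ((45/100) / lam) \<le> M^2 * (pi/lam)" using E by (rule order_trans)
  then have "(al^2 + be^2) * (45/100) \<le> M^2 * pi" by (rule divcancel[OF lam])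
  moreover have "M^2 * pi \<le> M^2 * 4" using pi_less_4 by (intro mult_left_mono) auto
  ultimately have AB0: "al^2 + be^2 \<le> 9 * M^2" by (rule lin_helper) simp
  then have AB: "al^2 + be^2 \<le> (3 * M)^2" by (simp add: power_mult_distrib)
  have bnd: "\<bar>p y\<bar> \<le> 3 * M" if y: "y \<in> {a..c}" for y
  proof -
    have "(p y)^2 \<le> al^2 + be^2" unfolding ab[rule_format, OF y] by (rule cs_2d) simp
    then have "\<bar>p y\<bar>^2 \<le> (3 * M)^2" using AB by (simp only: power2_abs)
    moreover have "0 \<le> 3 * M" using M0 by simp
    ultimately show ?thesis by (rule power2_le_imp_le)
  qed
  have ina: "a \<in> {a..c}" and inc': "c \<in> {a..c}" using ac by simp_all
  show "\<bar>p (t j)\<bar> \<le> 3 * sup_norm lam f" using bnd[OF ina] unfolding a_def M_def .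
  show "\<bar>p (t (Suc j))\<bar> \<le> 3 * sup_norm lam f" using bnd[OF inc'] unfolding c_def M_def .
qed


lemma int_pt: "integral {a..a} (g :: real \<Rightarrow> real) = 0"
  by (metis integral_refl cbox_interval)

lemma split4:
  fixes g :: "real \<Rightarrow> real"
  assumes g: "continuous_on {0..B} g" and o: "0 \<le> L" "L \<le> T" "T \<le> R" "R \<le> B"
  shows "integral {0..B} g = integral {0..L} g + integral {L..T} g + integral {T..R} g + integral {R..B} g"
proof -
  have i: "g integrable_on {x..y}" if "0 \<le> x" "y \<le> B" for x y
    by (rule integrable_continuous_interval, rule continuous_on_subset[OF g]) (use that in auto)
  have "integral {0..B} g = integral {0..L} g + integral {L..B} g"
    using Henstock_Kurzweil_Integration.integral_combine[of 0 L B g] o i[of 0 B] by simp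
  moreover have "integral {L..B} g = integral {L..T} g + integral {T..B} g"
    using Henstock_Kurzweil_Integration.integral_combine[of L T B g] o i[of L B] by simp
  moreover have "integral {T..B} g = integral {T..R} g + integral {R..B} g"
    using Henstock_Kurzweil_Integration.integral_combine[of T R B g] o i[of T B] by simp
  ultimately show ?thesis by simp
qed

lemma interior_bound:
  assumes f: "continuous_on {0..pi/lam} f"
    and i0: "i0 \<in> {1..n}" "i0 \<noteq> j" "i0 \<noteq> Suc j"
    and mx: "\<And>k. k \<in> {1..n} \<Longrightarrow> \<bar>spline_proj lam n t f (t k)\<bar> \<le> \<bar>spline_proj lam n t f (t i0)\<bar>"
  shows "\<bar>spline_proj lam n t f (t i0)\<bar> \<le> 8 * sup_norm lam f"
proof -
  define p where "p = spline_proj lam n t f"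
  define M where "M = sup_norm lam f"
  define m where "m = \<bar>p (t i0)\<bar>"
  define \<sigma> :: real where "\<sigma> = (if p (t i0) \<ge> 0 then 1 else -1)"
  have sig: "\<sigma> * p (t i0) = m" "\<bar>\<sigma>\<bar> = 1" unfolding \<sigma>_def m_def by auto
  have M0: "M \<ge> 0" unfolding M_def by (rule sup_norm_nonneg[OF f])
  have pV: "p \<in> trig_spline_space lam n t" unfolding p_def by (rule proj_spec(1)[OF f])
  have pc: "continuous_on {0..pi/lam} p" using space_cont[OF pV] .
  have mx': "\<And>k. k \<in> {1..n} \<Longrightarrow> \<bar>p (t k)\<bar> \<le> m" using mx unfolding p_def m_def by auto
  define T where "T = t i0"
  define L where "L = (if 1 < i0 then t (i0 - 1) else T)"
  define R where "R = (if i0 < n then t (Suc i0) else T)"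
  have i0r: "1 \<le> i0" "i0 \<le> n" using i0 by auto
  have phic: "continuous_on {0..pi/lam} (phi i0)" using hat_cont i0r by blast
  have phinn: "\<And>x. phi i0 x \<ge> 0" using hat_nonneg i0r by blast
  have Lo: "0 \<le> L" "L \<le> T"
  proof -
    have "0 \<le> L \<and> L \<le> T"
    proof (cases "1 < i0")
      case True
      then have "1 \<le> i0 - 1" "i0 - 1 \<le> n" "i0 - 1 \<le> i0" using i0r by auto
      then have "0 \<le> t (i0 - 1)" "t (i0 - 1) \<le> t i0" using t_range[of "i0-1"] le_iff[of "i0-1" i0] i0r by auto
      then show ?thesis unfolding L_def T_def using True by simp
    next
      case False
      then show ?thesis unfolding L_def T_def using t_range[of i0] i0r by simp
    qed
    then show "0 \<le> L" "L \<le> T" by auto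
  qed
  have Ro: "T \<le> R" "R \<le> pi/lam"
  proof -
    have "T \<le> R \<and> R \<le> pi/lam"
    proof (cases "i0 < n")
      case True
      then have "t i0 \<le> t (Suc i0)" "t (Suc i0) \<le> pi/lam" using inc[of i0] t_range[of "Suc i0"] i0r by auto
      then show ?thesis unfolding R_def T_def using True by simp
    next
      case False
      then show ?thesis unfolding R_def T_def using t_range[of i0] i0r by simp
    qed
    then show "T \<le> R" "R \<le> pi/lam" by auto
  qed
  have left: "\<sigma> * integral {L..T} (\<lambda>x. p x * phi i0 x) \<ge> m / 8 * integral {L..T} (phi i0)
      \<and> integral {L..T} (phi i0) \<ge> 0 \<and> (1 < i0 \<longrightarrow> integral {L..T} (phi i0) > 0)"
  proof (cases "1 < i0")
    case False
    then have "L = T" unfolding L_def by simp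
    then show ?thesis using False by (simp add: int_pt)
  next
    case True
    define a where "a = t (i0 - 1)"
    have ii: "i0 - 1 \<in> {1..<n}" "Suc (i0 - 1) = i0" "i0 - 1 \<noteq> j" using True i0 by auto
    have La: "L = a" unfolding L_def a_def using True by simp
    have acT: "a < T" using inc[OF ii(1)] ii(2) unfolding a_def T_def by simp
    have th: "lam * (T - a) \<le> 1" using small_seg_th[OF ii(1) ii(3)] ii(2) unfolding a_def T_def by simp
    have Peq: "p x = p T * (sin (lam * (x - a)) / sin (lam * (T - a))) + p a * (sin (lam * (T - x)) / sin (lam * (T - a)))"
      if x: "x \<in> {a..T}" for x
    proof -
      have xi: "x \<in> {t (i0-1)..t (Suc (i0-1))}" using x ii(2) unfolding a_def T_def by simp
      have e: "p x = p (t (i0-1)) * (sin (lam * (t (Suc (i0-1)) - x)) / sin (lam * (t (Suc (i0-1)) - t (i0-1))))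
          + p (t (Suc (i0-1))) * (sin (lam * (x - t (i0-1))) / sin (lam * (t (Suc (i0-1)) - t (i0-1))))"
        by (rule seg_interp[OF pV ii(1) xi])
      then show ?thesis unfolding ii(2) a_def T_def by linarith
    qed
    have im: "i0 - 1 \<in> {1..n}" using ii(1) by auto
    have uv: "\<bar>p a\<bar> \<le> \<bar>p T\<bar>" "\<sigma> * p T = \<bar>p T\<bar>" using mx'[OF im] sig unfolding a_def T_def m_def by auto
    note R1 = seg_test_right[OF lam acT th Peq uv sig(2)]
    have phi_eq: "\<And>x. x \<in> {a..T} \<Longrightarrow> phi i0 x = sin (lam * (x - a)) / sin (lam * (T - a))"
      using hat_left[of i0] True i0r unfolding a_def T_def by auto
    have e1: "integral {a..T} (\<lambda>x. p x * phi i0 x) = integral {a..T} (\<lambda>x. p x * (sin (lam * (x - a)) / sin (lam * (T - a))))"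
      by (rule Henstock_Kurzweil_Integration.integral_cong) (simp add: phi_eq)
    have e2: "integral {a..T} (phi i0) = integral {a..T} (\<lambda>x. sin (lam * (x - a)) / sin (lam * (T - a)))"
      by (rule Henstock_Kurzweil_Integration.integral_cong) (simp add: phi_eq)
    show ?thesis unfolding La e1 e2 using R1 sig unfolding m_def T_def by auto
  qed
  have right: "\<sigma> * integral {T..R} (\<lambda>x. p x * phi i0 x) \<ge> m / 8 * integral {T..R} (phi i0)
      \<and> integral {T..R} (phi i0) \<ge> 0 \<and> (i0 < n \<longrightarrow> integral {T..R} (phi i0) > 0)"
  proof (cases "i0 < n")
    case False
    then have "R = T" unfolding R_def by simp
    then show ?thesis using False by (simp add: int_pt)
  next
    case True
    define c where "c = t (Suc i0)"
    have ii: "i0 \<in> {1..<n}" using True i0 by auto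
    have Rc: "R = c" unfolding R_def c_def using True by simp
    have acT: "T < c" using inc[OF ii] unfolding c_def T_def by simp
    have th: "lam * (c - T) \<le> 1" using small_seg_th[OF ii i0(2)] unfolding c_def T_def by simp
    have Peq: "p x = p T * (sin (lam * (c - x)) / sin (lam * (c - T))) + p c * (sin (lam * (x - T)) / sin (lam * (c - T)))"
      if x: "x \<in> {T..c}" for x
    proof -
      have xi: "x \<in> {t i0..t (Suc i0)}" using x unfolding c_def T_def by simp
      show ?thesis unfolding c_def T_def by (rule seg_interp[OF pV ii xi])
    qed
    have uv: "\<bar>p c\<bar> \<le> \<bar>p T\<bar>" "\<sigma> * p T = \<bar>p T\<bar>" using mx'[of "Suc i0"] sig i0r True unfolding c_def T_def m_def by auto
    note R1 = seg_test_left[OF lam acT th Peq uv sig(2)]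
    have phi_eq: "\<And>x. x \<in> {T..c} \<Longrightarrow> phi i0 x = sin (lam * (c - x)) / sin (lam * (c - T))"
      using hat_right[of i0] True i0r unfolding c_def T_def by auto
    have e1: "integral {T..c} (\<lambda>x. p x * phi i0 x) = integral {T..c} (\<lambda>x. p x * (sin (lam * (c - x)) / sin (lam * (c - T))))"
      by (rule Henstock_Kurzweil_Integration.integral_cong) (simp add: phi_eq)
    have e2: "integral {T..c} (phi i0) = integral {T..c} (\<lambda>x. sin (lam * (c - x)) / sin (lam * (c - T)))"
      by (rule Henstock_Kurzweil_Integration.integral_cong) (simp add: phi_eq)
    show ?thesis unfolding Rc e1 e2 using R1 sig unfolding m_def T_def by auto
  qed
  have outL: "integral {0..L} g = 0" if g: "\<And>x. g x = h x * phi i0 x" for g h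
  proof (cases "1 < i0")
    case False
    then have "L = 0" unfolding L_def T_def using t1 i0r by auto
    then show ?thesis by (simp add: int_pt)
  next
    case True
    have "integral {0..L} g = integral {0..L} (\<lambda>x. 0)"
    proof (rule Henstock_Kurzweil_Integration.integral_cong)
      fix x assume x: "x \<in> {0..L}"
      have "t (i0 - 1) < t i0" using mono_lt[of "i0-1" i0] True i0r by auto
      then have "phi i0 x = 0" using x True unfolding hat_def L_def by auto
      then show "g x = 0" using g by simp
    qed
    then show ?thesis by simp
  qed
  have outR: "integral {R..pi/lam} g = 0" if g: "\<And>x. g x = h x * phi i0 x" for g h
  proof (cases "i0 < n")
    case False
    then have "R = pi/lam" unfolding R_def T_def using tn i0r by auto
    then show ?thesis by (simp add: int_pt)
  next
    case True
    have "integral {R..pi/lam} g = integral {R..pi/lam} (\<lambda>x. 0)"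
    proof (rule Henstock_Kurzweil_Integration.integral_cong)
      fix x assume x: "x \<in> {R..pi/lam}"
      have "t i0 < t (Suc i0)" using inc[of i0] True i0r by auto
      then have "phi i0 x = 0" using x True unfolding hat_def R_def by auto
      then show "g x = 0" using g by simp
    qed
    then show ?thesis by simp
  qed
  have Sp: "ipr 0 (pi/lam) p (phi i0) = integral {L..T} (\<lambda>x. p x * phi i0 x) + integral {T..R} (\<lambda>x. p x * phi i0 x)"
    unfolding ipr_def
    using split4[of "pi/lam" "\<lambda>x. p x * phi i0 x", OF _ Lo Ro] outL[of "\<lambda>x. p x * phi i0 x" p] outR[of "\<lambda>x. p x * phi i0 x" p]
    by (simp add: continuous_intros pc phic)
  have Sh: "integral {0..pi/lam} (phi i0) = integral {L..T} (phi i0) + integral {T..R} (phi i0)"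
    using split4[of "pi/lam" "phi i0", OF phic Lo Ro] outL[of "phi i0" "\<lambda>x. 1"] outR[of "phi i0" "\<lambda>x. 1"]
    by simp
  have Hpos: "integral {0..pi/lam} (phi i0) > 0"
  proof -
    have "1 < i0 \<or> i0 < n" using i0r n2 by linarith
    then show ?thesis unfolding Sh using left right by auto
  qed
  have lower: "\<sigma> * ipr 0 (pi/lam) p (phi i0) \<ge> m / 8 * integral {0..pi/lam} (phi i0)"
    unfolding Sp Sh using left right by (simp add: algebra_simps)
  have fp: "ipr 0 (pi/lam) f (phi i0) = ipr 0 (pi/lam) p (phi i0)"
    using proj_spec(2)[OF f hat_in_space[OF i0r]] unfolding p_def L2_inner_def ipr_def by simp
  have upper: "\<bar>ipr 0 (pi/lam) f (phi i0)\<bar> \<le> M * integral {0..pi/lam} (phi i0)"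
  proof -
    have int1: "(\<lambda>x. f x * phi i0 x) integrable_on {0..pi/lam}" by (intro integrable_continuous_interval continuous_intros f phic)
    have int2: "(\<lambda>x. M * phi i0 x) integrable_on {0..pi/lam}" by (intro integrable_continuous_interval continuous_intros phic)
    have int3: "(\<lambda>x. - (M * phi i0 x)) integrable_on {0..pi/lam}" by (intro integrable_continuous_interval continuous_intros phic)
    have pt: "\<bar>f x * phi i0 x\<bar> \<le> M * phi i0 x" if x: "x \<in> {0..pi/lam}" for x
    proof -
      have "\<bar>f x\<bar> \<le> M" unfolding M_def by (rule sup_norm_bound[OF f x])
      then have "\<bar>f x\<bar> * phi i0 x \<le> M * phi i0 x" using phinn by (intro mult_right_mono) auto
      then show ?thesis using phinn by (simp add: abs_mult)
    qed
    have pt1: "f x * phi i0 x \<le> M * phi i0 x" if x: "x \<in> {0..pi/lam}" for x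
      using pt[OF x] unfolding abs_le_iff by linarith
    have pt2: "- (M * phi i0 x) \<le> f x * phi i0 x" if x: "x \<in> {0..pi/lam}" for x
      using pt[OF x] unfolding abs_le_iff by linarith
    have "ipr 0 (pi/lam) f (phi i0) \<le> integral {0..pi/lam} (\<lambda>x. M * phi i0 x)"
      unfolding ipr_def by (rule integral_le[OF int1 int2]) (rule pt1)
    moreover have "- ipr 0 (pi/lam) f (phi i0) \<le> integral {0..pi/lam} (\<lambda>x. M * phi i0 x)"
    proof -
      have "integral {0..pi/lam} (\<lambda>x. - (M * phi i0 x)) \<le> ipr 0 (pi/lam) f (phi i0)"
        unfolding ipr_def by (rule integral_le[OF int3 int1]) (rule pt2)
      then show ?thesis by (simp add: integral_neg)
    qed
    ultimately show ?thesis by (simp add: Henstock_Kurzweil_Integration.integral_mult_right)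
  qed
  have "\<sigma> * ipr 0 (pi/lam) p (phi i0) \<le> M * integral {0..pi/lam} (phi i0)"
  proof -
    have "\<sigma> * ipr 0 (pi/lam) p (phi i0) \<le> \<bar>\<sigma> * ipr 0 (pi/lam) p (phi i0)\<bar>" by simp
    also have "\<dots> = \<bar>ipr 0 (pi/lam) f (phi i0)\<bar>" using sig(2) fp by (simp add: abs_mult)
    finally show ?thesis using upper by linarith
  qed
  with lower have "m / 8 * integral {0..pi/lam} (phi i0) \<le> M * integral {0..pi/lam} (phi i0)" by linarith
  then have "m / 8 \<le> M" using Hpos by simp
  then show ?thesis unfolding m_def p_def M_def by simp
qed

end


lemma lam_eps_bound: fixes lam e :: real assumes "lam > 0" "e < 1/(10*lam)" shows "lam * e \<le> 1/10"
proof -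
  have "lam * e < lam * (1/(10*lam))" using assms by (intro mult_strict_left_mono) auto
  also have "lam * (1/(10*lam)) = 1/10" using assms by simp
  finally show ?thesis by simp
qed

lemma eight_le: "8 \<le> 38 / pi"
proof -
  have "8 * pi \<le> 38" using pi_less_4 by simp
  then show ?thesis using pi_gt_zero by (simp add: le_divide_eq)
qed

theorem mainTheorem4:
  fixes lam :: real
  assumes "lam > 0"
  shows "\<exists>C \<epsilon>0. \<epsilon>0 > 0 \<and>
    (\<forall>n t j \<epsilon> f. is_partition (pi/lam) n t \<and> j \<in> {1..<n} \<and> \<epsilon> > 0 \<and> \<epsilon> < \<epsilon>0 \<and>
        t (Suc j) - t j = pi/lam - \<epsilon> \<and> continuous_on {0..pi/lam} f \<longrightarrow>
        (\<forall>i\<in>{1..n}. \<bar>spline_proj lam n t f (t i)\<bar> \<le> (38/pi + C * \<epsilon>) * sup_norm lam f))"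
proof (rule exI[where x = "0::real"], rule exI[where x = "1/(10*lam)"], intro conjI allI impI)
  show "1/(10*lam) > 0" using assms by simp
  fix n :: nat and t :: "nat \<Rightarrow> real" and j :: nat and \<epsilon> :: real and f :: "real \<Rightarrow> real"
  assume H: "is_partition (pi/lam) n t \<and> j \<in> {1..<n} \<and> \<epsilon> > 0 \<and> \<epsilon> < 1/(10*lam) \<and>
        t (Suc j) - t j = pi/lam - \<epsilon> \<and> continuous_on {0..pi/lam} f"
  have le: "lam * \<epsilon> \<le> 1/10" using lam_eps_bound[OF assms] H by blast
  interpret spl2 lam n t j \<epsilon>
    by unfold_locales (use assms H le in auto)
  have f: "continuous_on {0..pi/lam} f" using H by blast
  define g where "g = (\<lambda>k. \<bar>spline_proj lam n t f (t k)\<bar>)"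
  define M where "M = sup_norm lam f"
  have M0: "M \<ge> 0" unfolding M_def by (rule sup_norm_nonneg[OF f])
  have fin: "finite (g ` {1..n})" by simp
  have ne: "g ` {1..n} \<noteq> {}" using n2 by auto
  obtain i0 where i0: "i0 \<in> {1..n}" "g i0 = Max (g ` {1..n})"
    using Max_in[OF fin ne] by auto
  have gmax: "\<And>k. k \<in> {1..n} \<Longrightarrow> g k \<le> g i0"
    unfolding i0(2) using fin by (intro Max_ge) auto
  have gi0: "g i0 \<le> 8 * M"
  proof (cases "i0 = j \<or> i0 = Suc j")
    case True
    then have "g i0 \<le> 3 * M" using big_end_bound[OF f] unfolding g_def M_def by auto
    then show ?thesis using M0 by linarith
  next
    case False
    then show ?thesis using interior_bound[OF f, of i0] i0(1) gmax unfolding g_def M_def by auto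
  qed
  have "8 * M \<le> (38/pi) * M" using eight_le M0 by (intro mult_right_mono) auto
  then show "\<forall>i\<in>{1..n}. \<bar>spline_proj lam n t f (t i)\<bar> \<le> (38/pi + 0 * \<epsilon>) * sup_norm lam f"
    using gmax gi0 unfolding g_def M_def by fastforce
qed

end
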